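(* Let $n$ be a non-negative integer and let $F$ be a nonempty filter (upper order ideal) of the poset $I_{n}^{\bullet}$ of pointed integer partitions of $n$. Let $\Pi_{n}^{\bullet}(F)=\{\pi\in\Pi_{n}^{\bullet} : \mathrm{type}(\pi)\in F\}$ and $C_{n}^{\bullet}(F)=\{\vec{c}\in C_{n}^{\bullet} : \mathrm{type}(\vec{c})\in F\}$. Then $$\mu\left(\Pi_{n}^{\bullet}(F)\cup\{\hat{0}\}\right)=\sum_{\vec{c}\in C_{n}^{\bullet}(F)}(-1)^{\rho(\vec{c},\hat{1})}\cdot\mu_{C_{n}^{\bullet}(F)\cup\{\hat{0}\}}(\hat{0},\vec{c})\cdot\beta(\vec{c}).$$
   Context: A pointed integer partition of $n$ is a pair $\{\lambda,\underline{m}\}=\{\lambda_1,\dots,\lambda_k,\underline{m}\}$ where $m\ge 0$ is an integer (the pointed part) and $\lambda=\{\lambda_1,\dots,\lambda_k\}$ is an integer partition (multiset of positive integers) of $n-m$. The poset $I_n^{\bullet}$ of all pointed integer partitions of $n$ is ordered by the cover relations: replacing two non-pointed parts $\lambda_{k-1},\lambda_k$ by their sum $\lambda_{k-1}+\lambda_k$, and replacing a non-pointed part $\lambda_k$ and the pointed part $m$ by the pointed part $\lambda_k+m$ (going up in the order). A filter $F$ is a subset such that $x\le y$, $x\in F$ imply $y\in F$. A pointed set partition of $\{1,\dots,n\}$ is a pair $(\sigma,Z)$ with $Z\subseteq\{1,\dots,n\}$ (the zero block) and $\sigma$ a set partition of $\{1,\dots,n\}\setminus Z$. $\Pi_n^{\bullet}$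 is the poset of these ordered by refinement: $\pi\le\pi'$ if every block of $\pi$ is contained in some block (possibly the zero block) of $\pi'$ and the zero block of $\pi$ is contained in the zero block of $\pi'$. The type of $(\sigma,Z)$ is the pointed integer partition $\{\{|B|:B\in\sigma\},\underline{|Z|}\}$. A pointed composition of $n$ is a list $\vec{c}=(c_1,\dots,c_{k-1},\underline{c_k})$ of non-negative integers with sum $n$ where $c_1,\dots,c_{k-1}$ are positive ($c_k$ may be $0$). $C_n^{\bullet}$ is the poset of these with cover relations given by adding two adjacent entries (if the last entry is involved, the sum becomes the new last, underlined, entry); it is isomorphic to a Boolean algebra with maximum $(\underline{n})$. The type of $\vec{c}$ is the pointed integer partition $\{c_1,\dots,c_{k-1},\underline{c_k}\}$. $\beta(\vec{c})$: if $c_k>0$, it is the number of permutations in $\mathfrak{S}_n$ with descent set exactly $\{c_1,c_1+c_2,\dots,c_1+\dots+c_{k-1}\}$ (descent set of $\tau$ is $\{i:\tau(i)>\tau(i+1)\}$); if $k\ge2$ and $c_k=0$, $\beta(\vec{c})=0$; and $\beta((\underline{0}))=1$. For a poset $P$ with minimum $\hat{0}$ and maximum $\hat{1}$, $\mu(P)$ denotes $\mu_P(\hat{0},\hat{1})$. In $\Pi_n^{\bullet}(F)\cup\{\hat0\}$ and $C_n^{\bullet}(F)\cup\{\hat0\}$, $\hat{0}$ is a newly adjoined minimum, and $\hat{1}$ is the maximum of $\Pi_n^\bullet$ (all elements in the zero block), respectively $(\underline{n})$. $\rho(\vec{c},\hat{1})$ is the rank difference in $C_n^\bullet$ between $\vec{c}$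 and $(\underline{n})$, i.e. $k-1$ if $\vec{c}$ has $k$ entries. *)

theory Defs
  imports "HOL-Library.Multiset" "HOL-Library.Disjoint_Sets" "HOL-Combinatorics.Permutations"
begin

definition mobius :: "'a set \<Rightarrow> ('a \<Rightarrow> 'a \<Rightarrow> bool) \<Rightarrow> 'a \<Rightarrow> 'a \<Rightarrow> int" where
  "mobius P le = (THE f. \<forall>a b. f a b =
     (if a \<in> P \<and> b \<in> P \<and> le a b then
        (if a = b then 1 else - (\<Sum>z\<in>{z\<in>P. le a z \<and> le z b \<and> z \<noteq> b}. f a z))
      else 0))"

text \<open>Adjoining a new minimum: None is the new element, Some x the old elements.\<close>

fun lift_bot :: "('a \<Rightarrow> 'a \<Rightarrow> bool) \<Rightarrow> 'a option \<Rightarrow> 'a option \<Rightarrow> bool" where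
  "lift_bot le None _ = True"
| "lift_bot le (Some x) None = False"
| "lift_bot le (Some x) (Some y) = le x y"

definition with_bot :: "'a set \<Rightarrow> 'a option set" where
  "with_bot P = insert None (Some ` P)"

text \<open>A pointed integer partition is (lambda, m): lambda a multiset of positive integers,
  m the pointed part.\<close>

type_synonym pip = "nat multiset \<times> nat"

definition IP :: "nat \<Rightarrow> pip set" where
  "IP n = {(l, m). (\<forall>x\<in>#l. 0 < x) \<and> sum_mset l + m = n}"

inductive ip_cover :: "pip \<Rightarrow> pip \<Rightarrow> bool" where
  merge: "ip_cover (l + {#a, b#}, m) (l + {#a + b#}, m)"
| point: "ip_cover (l + {#a#}, m) (l, a + m)"

definition ip_le :: "pip \<Rightarrow> pip \<Rightarrow> bool" where
  "ip_le = ip_cover\<^sup>*\<^sup>*"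

definition is_filter_IP :: "nat \<Rightarrow> pip set \<Rightarrow> bool" where
  "is_filter_IP n F \<longleftrightarrow> F \<subseteq> IP n \<and> (\<forall>x\<in>F. \<forall>y\<in>IP n. ip_le x y \<longrightarrow> y \<in> F)"

type_synonym psp = "nat set set \<times> nat set"

definition PiP :: "nat \<Rightarrow> psp set" where
  "PiP n = {(s, Z). Z \<subseteq> {1..n} \<and> partition_on ({1..n} - Z) s}"

definition psp_le :: "psp \<Rightarrow> psp \<Rightarrow> bool" where
  "psp_le p q \<longleftrightarrow> (\<forall>B\<in>fst p. (\<exists>B'\<in>fst q. B \<subseteq> B') \<or> B \<subseteq> snd q) \<and> snd p \<subseteq> snd q"

definition psp_type :: "psp \<Rightarrow> pip" where
  "psp_type p = (image_mset card (mset_set (fst p)), card (snd p))"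

definition PiP_top :: "nat \<Rightarrow> psp" where
  "PiP_top n = ({}, {1..n})"

definition CP :: "nat \<Rightarrow> nat list set" where
  "CP n = {c. c \<noteq> [] \<and> sum_list c = n \<and> (\<forall>x\<in>set (butlast c). 0 < x)}"

inductive comp_cover :: "nat list \<Rightarrow> nat list \<Rightarrow> bool" where
  "comp_cover (xs @ a # b # ys) (xs @ (a + b) # ys)"

definition comp_le :: "nat list \<Rightarrow> nat list \<Rightarrow> bool" where
  "comp_le = comp_cover\<^sup>*\<^sup>*"

definition comp_type :: "nat list \<Rightarrow> pip" where
  "comp_type c = (mset (butlast c), last c)"

definition descents :: "(nat \<Rightarrow> nat) \<Rightarrow> nat \<Rightarrow> nat set" where
  "descents t n = {i \<in> {1..<n}. t i > t (Suc i)}"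

definition comp_descent_set :: "nat list \<Rightarrow> nat set" where
  "comp_descent_set c = {sum_list (take j c) | j. 1 \<le> j \<and> j < length c}"

definition beta :: "nat list \<Rightarrow> int" where
  "beta c = (if last c > 0 then
       int (card {t. t permutes {1..sum_list c} \<and> descents t (sum_list c) = comp_descent_set c})
     else if length c \<ge> 2 then 0 else 1)"

end

theory Submission
  imports Defs
begin


function mob :: "'a set \<Rightarrow> ('a \<Rightarrow> 'a \<Rightarrow> bool) \<Rightarrow> 'a \<Rightarrow> 'a \<Rightarrow> int" where
  "mob A le a b = (if a \<in> A \<and> b \<in> A \<and> le a b then
      (if a = b then 1 else - (\<Sum>z\<in>{z\<in>A. le a z \<and> le z b \<and> z \<noteq> b
           \<and> card {y\<in>A. le y z} < card {y\<in>A. le y b}}. mob A le a z))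
      else 0)"
  by auto
termination
  by (relation "measure (\<lambda>(A,le,a,b). card {y\<in>A. le y b})") auto

declare mob.simps[simp del]

definition porder_on :: "'a set \<Rightarrow> ('a \<Rightarrow> 'a \<Rightarrow> bool) \<Rightarrow> bool" where
  "porder_on A le \<longleftrightarrow> (\<forall>x\<in>A. le x x) \<and> (\<forall>x\<in>A. \<forall>y\<in>A. le x y \<longrightarrow> le y x \<longrightarrow> x = y)
     \<and> (\<forall>x\<in>A. \<forall>y\<in>A. \<forall>z\<in>A. le x y \<longrightarrow> le y z \<longrightarrow> le x z)"

lemma card_below_less:
  assumes "finite A" "porder_on A le" "z \<in> A" "b \<in> A" "le z b" "z \<noteq> b"
  shows "card {y\<in>A. le y z} < card {y\<in>A. le y b}"
proof (rule psubset_card_mono)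
  show "finite {y\<in>A. le y b}" using assms by auto
  have "{y\<in>A. le y z} \<subseteq> {y\<in>A. le y b}" using assms unfolding porder_on_def by blast
  moreover have "b \<in> {y\<in>A. le y b}" "b \<notin> {y\<in>A. le y z}" using assms unfolding porder_on_def by blast+
  ultimately show "{y\<in>A. le y z} \<subset> {y\<in>A. le y b}" by blast
qed

definition mobeq :: "'a set \<Rightarrow> ('a \<Rightarrow> 'a \<Rightarrow> bool) \<Rightarrow> ('a \<Rightarrow> 'a \<Rightarrow> int) \<Rightarrow> bool" where
  "mobeq A le f \<longleftrightarrow> (\<forall>a b. f a b =
     (if a \<in> A \<and> b \<in> A \<and> le a b then
        (if a = b then 1 else - (\<Sum>z\<in>{z\<in>A. le a z \<and> le z b \<and> z \<noteq> b}. f a z))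
      else 0))"

lemma mob_mobeq:
  assumes "finite A" "porder_on A le"
  shows "mobeq A le (mob A le)"
  unfolding mobeq_def
proof (intro allI)
  fix a b
  have "{z\<in>A. le a z \<and> le z b \<and> z \<noteq> b \<and> card {y\<in>A. le y z} < card {y\<in>A. le y b}}
      = {z\<in>A. le a z \<and> le z b \<and> z \<noteq> b}" if "b \<in> A"
    using card_below_less[OF assms _ that] by blast
  then show "mob A le a b = (if a \<in> A \<and> b \<in> A \<and> le a b then
        (if a = b then 1 else - (\<Sum>z\<in>{z\<in>A. le a z \<and> le z b \<and> z \<noteq> b}. mob A le a z))
      else 0)"
    by (subst mob.simps) auto
qed

lemma mobeq_unique:
  assumes "finite A" "porder_on A le" "mobeq A le f" "mobeq A le g"
  shows "f a b = g a b"
proof (induction "card {y\<in>A. le y b}" arbitrary: b rule: less_induct)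
  case less
  show ?case
  proof (cases "a \<in> A \<and> b \<in> A \<and> le a b \<and> a \<noteq> b")
    case True
    have "(\<Sum>z\<in>{z\<in>A. le a z \<and> le z b \<and> z \<noteq> b}. f a z) = (\<Sum>z\<in>{z\<in>A. le a z \<and> le z b \<and> z \<noteq> b}. g a z)"
      apply (rule sum.cong, simp)
      using less card_below_less[OF assms(1,2)] True by blast
    then show ?thesis using assms(3)[unfolded mobeq_def, rule_format, of a b]
      assms(4)[unfolded mobeq_def, rule_format, of a b] True by simp
  next
    case False
    then show ?thesis using assms(3)[unfolded mobeq_def, rule_format, of a b]
      assms(4)[unfolded mobeq_def, rule_format, of a b] by auto
  qed
qed

lemma mobius_eq_mob:
  assumes "finite A" "porder_on A le"
  shows "mobius A le = mob A le"
proof -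
  have "(THE f. mobeq A le f) = mob A le"
  proof (rule the_equality)
    show "mobeq A le (mob A le)" by (rule mob_mobeq[OF assms])
    fix f assume "mobeq A le f"
    then show "f = mob A le"
      by (intro ext) (rule mobeq_unique[OF assms _ mob_mobeq[OF assms]])
  qed
  moreover have "mobius A le = (THE f. mobeq A le f)" unfolding mobius_def mobeq_def by (rule refl)
  ultimately show ?thesis by simp
qed

lemma mobius_rec:
  assumes "finite A" "porder_on A le"
  shows "mobius A le a b = (if a \<in> A \<and> b \<in> A \<and> le a b then
        (if a = b then 1 else - (\<Sum>z\<in>{z\<in>A. le a z \<and> le z b \<and> z \<noteq> b}. mobius A le a z))
      else 0)"
  unfolding mobius_eq_mob[OF assms] by (rule mob_mobeq[OF assms, unfolded mobeq_def, rule_format])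

lemma porder_with_bot:
  assumes "porder_on P le" shows "porder_on (with_bot P) (lift_bot le)"
proof -
  have r: "\<And>x. x \<in> P \<Longrightarrow> le x x" and a: "\<And>x y. x \<in> P \<Longrightarrow> y \<in> P \<Longrightarrow> le x y \<Longrightarrow> le y x \<Longrightarrow> x = y"
    and t: "\<And>x y z. x \<in> P \<Longrightarrow> y \<in> P \<Longrightarrow> z \<in> P \<Longrightarrow> le x y \<Longrightarrow> le y z \<Longrightarrow> le x z"
    using assms unfolding porder_on_def by blast+
  show ?thesis unfolding porder_on_def with_bot_def
  proof (intro conjI ballI impI)
    fix x assume "x \<in> insert None (Some ` P)" then show "lift_bot le x x" using r by (cases x) auto
  next
    fix x y assume "x \<in> insert None (Some ` P)" "y \<in> insert None (Some ` P)" "lift_bot le x y" "lift_bot le y x"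
    then show "x = y" by (cases x; cases y) (auto intro: a)
  next
    fix x y z assume "x \<in> insert None (Some ` P)" "y \<in> insert None (Some ` P)" "z \<in> insert None (Some ` P)" "lift_bot le x y" "lift_bot le y z"
    then show "lift_bot le x z" by (cases x; cases y; cases z) (auto intro: t)
  qed
qed

lemma mobius_bot_sum:
  assumes "finite P" "porder_on P le" "y \<in> P"
  shows "(\<Sum>x\<in>{x\<in>P. le x y}. mobius (with_bot P) (lift_bot le) None (Some x)) = -1"
proof -
  let ?m = "mobius (with_bot P) (lift_bot le)"
  have fin: "finite (with_bot P)" using assms(1) by (simp add: with_bot_def)
  note rec = mobius_rec[OF fin porder_with_bot[OF assms(2)]]
  have ry: "le y y" using assms unfolding porder_on_def by auto
  have "{z\<in>with_bot P. lift_bot le None z \<and> lift_bot le z (Some y) \<and> z \<noteq> Some y}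
      = insert None (Some ` {x\<in>P. le x y \<and> x \<noteq> y})"
    unfolding with_bot_def apply (rule set_eqI) subgoal for z by (cases z) auto done
  then have "?m None (Some y) = - (\<Sum>z\<in>insert None (Some ` {x\<in>P. le x y \<and> x \<noteq> y}). ?m None z)"
    using rec[of None "Some y"] assms ry by (simp add: with_bot_def)
  also have "\<dots> = - (1 + (\<Sum>x\<in>{x\<in>P. le x y \<and> x \<noteq> y}. ?m None (Some x)))"
    using assms(1) rec[of None None] by (simp add: sum.reindex with_bot_def)
  finally have *: "?m None (Some y) + (\<Sum>x\<in>{x\<in>P. le x y \<and> x \<noteq> y}. ?m None (Some x)) = -1" by simp
  have "{x\<in>P. le x y} = insert y {x\<in>P. le x y \<and> x \<noteq> y}" using assms ry by auto
  then show ?thesis using * assms(1) by simp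
qed

lemma weighted_sum:
  fixes u w :: "'a \<Rightarrow> int"
  assumes finQ: "finite Q" and PQ: "P \<subseteq> Q" and po: "porder_on P le"
    and up: "\<And>x y. x \<in> P \<Longrightarrow> y \<in> Q \<Longrightarrow> le x y \<Longrightarrow> y \<in> P"
    and w: "\<And>z. z \<in> P \<Longrightarrow> w z = (\<Sum>x\<in>{x\<in>Q. le z x}. u x)"
  shows "(\<Sum>z\<in>P. mobius (with_bot P) (lift_bot le) None (Some z) * w z) = - (\<Sum>x\<in>P. u x)"
proof -
  let ?g = "\<lambda>z. mobius (with_bot P) (lift_bot le) None (Some z)"
  have finP: "finite P" using finQ PQ finite_subset by auto
  have "(\<Sum>z\<in>P. ?g z * w z) = (\<Sum>z\<in>P. \<Sum>x\<in>Q. if le z x then ?g z * u x else 0)"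
    apply (rule sum.cong, simp)
    using w finQ by (simp add: sum_distrib_left sum.inter_filter[symmetric])
  also have "\<dots> = (\<Sum>x\<in>Q. \<Sum>z\<in>P. if le z x then ?g z * u x else 0)"
    by (rule sum.swap)
  also have "\<dots> = (\<Sum>x\<in>Q. if x \<in> P then - u x else 0)"
  proof (rule sum.cong, simp)
    fix x assume xQ: "x \<in> Q"
    have "(\<Sum>z\<in>P. if le z x then ?g z * u x else 0) = (\<Sum>z\<in>{z\<in>P. le z x}. ?g z) * u x"
      using finP by (simp add: sum_distrib_right sum.inter_filter[symmetric])
    also have "\<dots> = (if x \<in> P then - u x else 0)"
    proof (cases "x \<in> P")
      case True then show ?thesis using mobius_bot_sum[OF finP po True] by simp
    next
      case False
      then have "{z\<in>P. le z x} = {}" using up xQ by blast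
      then have "(\<Sum>z\<in>{z\<in>P. le z x}. ?g z) = 0" by (simp only: sum.empty)
      then show ?thesis using False by simp
    qed
    finally show "(\<Sum>z\<in>P. if le z x then ?g z * u x else 0) = (if x \<in> P then - u x else 0)" .
  qed
  also have "\<dots> = - (\<Sum>x\<in>P. u x)"
    using finQ PQ by (simp add: sum.If_cases sum_negf Int_absorb1)
  finally show ?thesis .
qed


fun okl :: "nat set list \<Rightarrow> bool" where
  "okl [] = True"
| "okl (B # bs) = (B \<noteq> {} \<and> B \<inter> \<Union>(set bs) = {} \<and> okl bs)"

lemma okl_append: "okl (xs @ ys) \<longleftrightarrow> okl xs \<and> okl ys \<and> \<Union>(set xs) \<inter> \<Union>(set ys) = {}"
  by (induction xs) auto

lemma okl_distinct: "okl bs \<Longrightarrow> distinct bs"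
  by (induction bs) auto

lemma okl_disj: "okl bs \<Longrightarrow> B \<in> set bs \<Longrightarrow> C \<in> set bs \<Longrightarrow> B \<noteq> C \<Longrightarrow> B \<inter> C = {}"
  by (induction bs) auto

lemma okl_nonempty: "okl bs \<Longrightarrow> B \<in> set bs \<Longrightarrow> B \<noteq> {}"
  by (induction bs) auto

definition OL :: "nat \<Rightarrow> nat set list set" where
  "OL n = {bs. okl bs \<and> \<Union>(set bs) \<subseteq> {1..n}}"

definition psi :: "nat \<Rightarrow> nat set list \<Rightarrow> psp" where
  "psi n bs = (set bs, {1..n} - \<Union>(set bs))"

lemma finite_OL: "finite (OL n)"
proof (rule finite_subset)
  show "OL n \<subseteq> {xs. set xs \<subseteq> Pow {1..n} \<and> distinct xs}"
    unfolding OL_def using okl_distinct by auto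
  show "finite {xs. set xs \<subseteq> Pow {1..n} \<and> distinct xs}"
    by (rule finite_subset_distinct) simp
qed

lemma psi_PiP: assumes "bs \<in> OL n" shows "psi n bs \<in> PiP n"
proof -
  have o: "okl bs" and u: "\<Union>(set bs) \<subseteq> {1..n}" using assms unfolding OL_def by auto
  have "partition_on (\<Union>(set bs)) (set bs)"
  proof (rule partition_onI)
    fix p q assume "p \<in> set bs" "q \<in> set bs" "p \<noteq> q"
    then show "disjnt p q" using okl_disj[OF o] by (simp add: disjnt_def)
  qed (use okl_nonempty[OF o] in auto)
  moreover have "{1..n} - ({1..n} - \<Union>(set bs)) = \<Union>(set bs)" using u by auto
  ultimately show ?thesis unfolding psi_def PiP_def by auto
qed

lemma finite_PiP: "finite (PiP n)"
proof (rule finite_subset)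
  show "PiP n \<subseteq> Pow (Pow {1..n}) \<times> Pow {1..n}"
    unfolding PiP_def partition_on_def by auto
qed simp

definition hinv :: "nat set \<Rightarrow> nat set list \<Rightarrow> nat set list" where
  "hinv b0 bs = (let xs = takeWhile (\<lambda>B. b0 \<inter> B = {}) bs in
     case dropWhile (\<lambda>B. b0 \<inter> B = {}) bs of
       [] \<Rightarrow> bs @ [b0]
     | B # r \<Rightarrow> if B = b0 then (case r of [] \<Rightarrow> xs | C # ys \<Rightarrow> xs @ (b0 \<union> C) # ys)
               else xs @ b0 # (B - b0) # r)"

lemma tw_dw:
  assumes "\<forall>B\<in>set xs. b0 \<inter> B = {}" "b0 \<inter> B \<noteq> {}"
  shows "takeWhile (\<lambda>B. b0 \<inter> B = {}) (xs @ B # ys) = xs"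
    "dropWhile (\<lambda>B. b0 \<inter> B = {}) (xs @ B # ys) = B # ys"
  using assms by (induction xs) auto

lemma h1: "\<forall>B\<in>set bs. b0 \<inter> B = {} \<Longrightarrow> hinv b0 bs = bs @ [b0]"
  unfolding hinv_def by (simp add: Let_def dropWhile_eq_Nil_conv[THEN iffD2])

lemma h2: "\<forall>B\<in>set xs. b0 \<inter> B = {} \<Longrightarrow> b0 \<noteq> {} \<Longrightarrow> hinv b0 (xs @ [b0]) = xs"
  unfolding hinv_def using tw_dw[of xs b0 b0 "[]"] by (simp add: Let_def)

lemma h3: "\<forall>B\<in>set xs. b0 \<inter> B = {} \<Longrightarrow> b0 \<noteq> {} \<Longrightarrow> hinv b0 (xs @ b0 # C # ys) = xs @ (b0 \<union> C) # ys"
  unfolding hinv_def using tw_dw[of xs b0 b0 "C # ys"] by (simp add: Let_def)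

lemma h4: "\<forall>B\<in>set xs. b0 \<inter> B = {} \<Longrightarrow> b0 \<inter> B \<noteq> {} \<Longrightarrow> B \<noteq> b0
   \<Longrightarrow> hinv b0 (xs @ B # ys) = xs @ b0 # (B - b0) # ys"
  unfolding hinv_def using tw_dw[of xs b0 B ys] by (simp add: Let_def)

definition coarse :: "nat \<Rightarrow> nat set set \<Rightarrow> nat set \<Rightarrow> nat set list \<Rightarrow> bool" where
  "coarse n s Z bs \<longleftrightarrow> okl bs \<and> \<Union>(set bs) \<subseteq> {1..n} \<and>
     (\<forall>b\<in>s. (\<exists>B'\<in>set bs. b \<subseteq> B') \<or> b \<inter> \<Union>(set bs) = {}) \<and> Z \<inter> \<Union>(set bs) = {}"

lemma coarse_iff:
  assumes "(s, Z) \<in> PiP n"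
  shows "(bs \<in> OL n \<and> psp_le (s, Z) (psi n bs)) \<longleftrightarrow> coarse n s Z bs"
proof -
  have sub: "\<And>b. b \<in> s \<Longrightarrow> b \<subseteq> {1..n}" and Zs: "Z \<subseteq> {1..n}"
    using assms unfolding PiP_def partition_on_def by auto
  have eq: "\<And>b. b\<in>s \<Longrightarrow> (b \<subseteq> {1..n} - \<Union>(set bs) \<longleftrightarrow> b \<inter> \<Union>(set bs) = {})" using sub by blast
  have Zeq: "Z \<subseteq> {1..n} - \<Union>(set bs) \<longleftrightarrow> Z \<inter> \<Union>(set bs) = {}" using Zs by blast
  show ?thesis
    unfolding coarse_def OL_def psp_le_def psi_def fst_conv snd_conv mem_Collect_eq
    using eq Zeq by (simp cong: ball_cong)
qed

locale invol =
  fixes n :: nat and s :: "nat set set" and Z :: "nat set" and b0 :: "nat set"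
  assumes PiP: "(s, Z) \<in> PiP n" and b0: "b0 \<in> s"
begin

lemma b0_ne: "b0 \<noteq> {}" using PiP b0 unfolding PiP_def partition_on_def by auto
lemma b0_sub: "b0 \<subseteq> {1..n}" using PiP b0 unfolding PiP_def partition_on_def by auto
lemma b0_Z: "b0 \<inter> Z = {}" using PiP b0 unfolding PiP_def partition_on_def by auto
lemma s_ne: "b \<in> s \<Longrightarrow> b \<noteq> {}" using PiP unfolding PiP_def partition_on_def by auto
lemma s_disj: "b \<in> s \<Longrightarrow> b \<noteq> b0 \<Longrightarrow> b \<inter> b0 = {}"
proof -
  assume "b \<in> s" "b \<noteq> b0"
  moreover have "disjoint s" using PiP unfolding PiP_def by (auto dest: partition_onD2)
  ultimately show "b \<inter> b0 = {}" using b0 by (auto dest: disjointD)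
qed

lemma b0_in:
  assumes "coarse n s Z bs" "B \<in> set bs" "b0 \<inter> B \<noteq> {}"
  shows "b0 \<subseteq> B"
proof -
  have o: "okl bs" using assms(1) unfolding coarse_def by simp
  have "\<forall>b\<in>s. (\<exists>B'\<in>set bs. b \<subseteq> B') \<or> b \<inter> \<Union>(set bs) = {}"
    using assms(1) unfolding coarse_def by simp
  then have "(\<exists>B'\<in>set bs. b0 \<subseteq> B') \<or> b0 \<inter> \<Union>(set bs) = {}" using b0 by simp
  then show ?thesis
  proof
    assume "\<exists>B'\<in>set bs. b0 \<subseteq> B'"
    then obtain B' where B': "B' \<in> set bs" "b0 \<subseteq> B'" by blast
    then have "B' \<inter> B \<noteq> {}" using assms(3) by blast
    then have "B' = B" using okl_disj[OF o B'(1) assms(2)] by blast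
    then show ?thesis using B' by simp
  next
    assume "b0 \<inter> \<Union>(set bs) = {}" then show ?thesis using assms(2,3) by blast
  qed
qed

lemma shapes:
  assumes "coarse n s Z bs"
  shows "(\<forall>B\<in>set bs. b0 \<inter> B = {})
    \<or> (\<exists>xs. (\<forall>B\<in>set xs. b0 \<inter> B = {}) \<and> bs = xs @ [b0])
    \<or> (\<exists>xs C ys. (\<forall>B\<in>set xs. b0 \<inter> B = {}) \<and> bs = xs @ b0 # C # ys)
    \<or> (\<exists>xs B ys. (\<forall>B\<in>set xs. b0 \<inter> B = {}) \<and> b0 \<subseteq> B \<and> B \<noteq> b0 \<and> bs = xs @ B # ys)"
proof (cases "dropWhile (\<lambda>B. b0 \<inter> B = {}) bs")
  case Nil
  then show ?thesis by (simp add: dropWhile_eq_Nil_conv)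
next
  case (Cons B r)
  define xs where "xs = takeWhile (\<lambda>B. b0 \<inter> B = {}) bs"
  have xs: "\<forall>B\<in>set xs. b0 \<inter> B = {}" unfolding xs_def by (auto dest: set_takeWhileD)
  have bs: "bs = xs @ B # r" unfolding xs_def using Cons takeWhile_dropWhile_id by metis
  have "b0 \<inter> B \<noteq> {}" using hd_dropWhile[of "\<lambda>B. b0 \<inter> B = {}" bs] Cons by simp
  then have sub: "b0 \<subseteq> B" using b0_in[OF assms, of B] bs by simp
  show ?thesis
  proof (cases "B = b0")
    case True
    show ?thesis
    proof (cases r)
      case Nil then show ?thesis using xs bs True by auto
    next
      case (Cons C ys)
      then have "\<exists>xs' C' ys'. (\<forall>B\<in>set xs'. b0 \<inter> B = {}) \<and> bs = xs' @ b0 # C' # ys'"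
        using xs bs True by blast
      then show ?thesis by blast
    qed
  next
    case False
    then show ?thesis using xs bs sub by blast
  qed
qed

lemma case1:
  assumes c: "coarse n s Z bs" and d: "\<forall>B\<in>set bs. b0 \<inter> B = {}"
  shows "coarse n s Z (bs @ [b0])"
proof -
  have o: "okl (bs @ [b0])" using c d b0_ne unfolding coarse_def okl_append by auto
  have u: "\<Union>(set (bs @ [b0])) \<subseteq> {1..n}" using c b0_sub unfolding coarse_def by auto
  have z: "Z \<inter> \<Union>(set (bs @ [b0])) = {}" using c b0_Z unfolding coarse_def by auto
  have w: "\<forall>b\<in>s. (\<exists>B'\<in>set (bs @ [b0]). b \<subseteq> B') \<or> b \<inter> \<Union>(set (bs @ [b0])) = {}"
  proof
    fix b assume bs: "b \<in> s"
    show "(\<exists>B'\<in>set (bs @ [b0]). b \<subseteq> B') \<or> b \<inter> \<Union>(set (bs @ [b0])) = {}"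
    proof (cases "b = b0")
      case True then show ?thesis by auto
    next
      case False
      then have bb: "b \<inter> b0 = {}" using s_disj bs by auto
      have "(\<exists>B'\<in>set bs. b \<subseteq> B') \<or> b \<inter> \<Union>(set bs) = {}"
        using c bs unfolding coarse_def by blast
      then show ?thesis using bb by auto
    qed
  qed
  show ?thesis unfolding coarse_def using o u z w by blast
qed

lemma case2:
  assumes c: "coarse n s Z (xs @ [b0])" and d: "\<forall>B\<in>set xs. b0 \<inter> B = {}"
  shows "coarse n s Z xs"
  unfolding coarse_def
proof (intro conjI ballI)
  show "okl xs" "\<Union>(set xs) \<subseteq> {1..n}" "Z \<inter> \<Union>(set xs) = {}"
    using c unfolding coarse_def okl_append by auto
  fix b assume bs: "b \<in> s"
  show "(\<exists>B'\<in>set xs. b \<subseteq> B') \<or> b \<inter> \<Union>(set xs) = {}"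
  proof (cases "b = b0")
    case True then show ?thesis using d by auto
  next
    case False
    then have bb: "b \<inter> b0 = {}" "b \<noteq> {}" using s_disj s_ne bs by auto
    have "(\<exists>B'\<in>set (xs @ [b0]). b \<subseteq> B') \<or> b \<inter> \<Union>(set (xs @ [b0])) = {}"
      using c bs unfolding coarse_def by blast
    then show ?thesis using bb by auto
  qed
qed

lemma case3:
  assumes c: "coarse n s Z (xs @ b0 # C # ys)"
  shows "coarse n s Z (xs @ (b0 \<union> C) # ys)"
proof -
  have U: "\<Union>(set (xs @ (b0 \<union> C) # ys)) = \<Union>(set (xs @ b0 # C # ys))" by auto
  show ?thesis
    unfolding coarse_def U
  proof (intro conjI ballI)
    show "okl (xs @ (b0 \<union> C) # ys)" using c unfolding coarse_def okl_append by auto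
    show "\<Union>(set (xs @ b0 # C # ys)) \<subseteq> {1..n}" "Z \<inter> \<Union>(set (xs @ b0 # C # ys)) = {}"
      using c unfolding coarse_def by auto
    fix b assume bs: "b \<in> s"
    then have "(\<exists>B'\<in>set (xs @ b0 # C # ys). b \<subseteq> B') \<or> b \<inter> \<Union>(set (xs @ b0 # C # ys)) = {}"
      using c unfolding coarse_def by blast
    then show "(\<exists>B'\<in>set (xs @ (b0 \<union> C) # ys). b \<subseteq> B') \<or> b \<inter> \<Union>(set (xs @ b0 # C # ys)) = {}"
      by auto
  qed
qed

lemma case4:
  assumes c: "coarse n s Z (xs @ B # ys)" and sub: "b0 \<subseteq> B" "B \<noteq> b0"
  shows "coarse n s Z (xs @ b0 # (B - b0) # ys)"
proof -
  have U: "\<Union>(set (xs @ b0 # (B - b0) # ys)) = \<Union>(set (xs @ B # ys))" using sub by auto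
  show ?thesis
    unfolding coarse_def U
  proof (intro conjI ballI)
    show "okl (xs @ b0 # (B - b0) # ys)" using c sub b0_ne unfolding coarse_def okl_append by auto
    show "\<Union>(set (xs @ B # ys)) \<subseteq> {1..n}" "Z \<inter> \<Union>(set (xs @ B # ys)) = {}"
      using c unfolding coarse_def by auto
    fix b assume bs: "b \<in> s"
    then have "(\<exists>B'\<in>set (xs @ B # ys). b \<subseteq> B') \<or> b \<inter> \<Union>(set (xs @ B # ys)) = {}"
      using c unfolding coarse_def by blast
    moreover have "b \<subseteq> B \<Longrightarrow> b \<subseteq> b0 \<or> b \<subseteq> B - b0"
      using s_disj[OF bs] by auto
    ultimately show "(\<exists>B'\<in>set (xs @ b0 # (B - b0) # ys). b \<subseteq> B') \<or> b \<inter> \<Union>(set (xs @ B # ys)) = {}"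
      by auto
  qed
qed

lemma hinv_props:
  assumes c: "coarse n s Z bs"
  shows "coarse n s Z (hinv b0 bs) \<and> hinv b0 (hinv b0 bs) = bs
     \<and> (length (hinv b0 bs) = Suc (length bs) \<or> Suc (length (hinv b0 bs)) = length bs)"
  using shapes[OF c]
proof (elim disjE exE conjE)
  assume d: "\<forall>B\<in>set bs. b0 \<inter> B = {}"
  then show ?thesis using h1[OF d] h2[OF d b0_ne] case1[OF c d] by simp
next
  fix xs assume d: "\<forall>B\<in>set xs. b0 \<inter> B = {}" and bs: "bs = xs @ [b0]"
  then show ?thesis using h1[OF d] h2[OF d b0_ne] case2[OF c[unfolded bs] d] by simp
next
  fix xs C ys assume d: "\<forall>B\<in>set xs. b0 \<inter> B = {}" and bs: "bs = xs @ b0 # C # ys"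
  have okl: "C \<noteq> {}" "C \<inter> b0 = {}" using c unfolding bs coarse_def okl_append by auto
  have "b0 \<inter> (b0 \<union> C) \<noteq> {}" "b0 \<union> C \<noteq> b0" "b0 \<union> C - b0 = C" using okl b0_ne by auto
  then show ?thesis using h3[OF d b0_ne] h4[OF d, of "b0 \<union> C" ys] case3[OF c[unfolded bs]] bs
    by simp
next
  fix xs B ys assume d: "\<forall>B\<in>set xs. b0 \<inter> B = {}" and sub: "b0 \<subseteq> B" "B \<noteq> b0" and bs: "bs = xs @ B # ys"
  have "b0 \<inter> B \<noteq> {}" using sub b0_ne by auto
  moreover have "b0 \<union> (B - b0) = B" using sub by auto
  ultimately show ?thesis using h4[OF d _ sub(2)] h3[OF d b0_ne, of "B - b0" ys] case4[OF c[unfolded bs] sub] bs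
    by simp
qed

lemma sum_zero: "(\<Sum>bs\<in>{bs. coarse n s Z bs}. (-1::int) ^ length bs) = 0"
proof (rule sum_involution_eq_0[where h = "hinv b0"])
  fix bs assume "bs \<in> {bs. coarse n s Z bs}"
  then have c: "coarse n s Z bs" by simp
  from hinv_props[OF c] have "length (hinv b0 bs) = Suc (length bs) \<or> Suc (length (hinv b0 bs)) = length bs"
    by blast
  then show "(-1::int) ^ length (hinv b0 bs) + (-1) ^ length bs = 0"
  proof
    assume "length (hinv b0 bs) = Suc (length bs)" then show ?thesis by simp
  next
    assume e: "Suc (length (hinv b0 bs)) = length bs" then show ?thesis by (simp add: e[symmetric])
  qed
  from hinv_props[OF c] show "hinv b0 bs \<in> {bs. coarse n s Z bs}" "hinv b0 (hinv b0 bs) = bs" by auto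
  from hinv_props[OF c] show "hinv b0 bs \<noteq> bs" by auto
qed

end

lemma sum_coarse:
  assumes pi: "\<pi> \<in> PiP n"
  shows "(\<Sum>bs\<in>{bs\<in>OL n. psp_le \<pi> (psi n bs)}. (-1::int) ^ length bs) = (if \<pi> = PiP_top n then 1 else 0)"
proof -
  obtain s Z where sZ: "\<pi> = (s, Z)" by (cases \<pi>)
  have set_eq: "{bs\<in>OL n. psp_le \<pi> (psi n bs)} = {bs. coarse n s Z bs}"
    using coarse_iff[of s Z n] pi sZ by auto
  show ?thesis
  proof (cases "s = {}")
    case True
    then have "partition_on ({1..n} - Z) {}" "Z \<subseteq> {1..n}" using pi sZ unfolding PiP_def by auto
    then have Z: "Z = {1..n}" using partition_onD1 by fastforce
    have "{bs. coarse n s Z bs} = {[]}"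
    proof (intro set_eqI iffI)
      fix bs assume "bs \<in> {bs. coarse n s Z bs}"
      then have "okl bs" "\<Union>(set bs) \<subseteq> {1..n}" "{1..n} \<inter> \<Union>(set bs) = {}" unfolding coarse_def Z by auto
      then have "okl bs" "\<Union>(set bs) = {}" by blast+
      then show "bs \<in> {[]}" using okl_nonempty by (cases bs) auto
    qed (auto simp: coarse_def)
    then show ?thesis using set_eq sZ True Z by (simp add: PiP_top_def)
  next
    case False
    then obtain b0 where b0: "b0 \<in> s" by auto
    interpret invol n s Z b0 using pi sZ b0 by unfold_locales auto
    have "\<pi> \<noteq> PiP_top n" using sZ False by (simp add: PiP_top_def)
    then show ?thesis using sum_zero set_eq by simp
  qed
qed

definition uP :: "nat \<Rightarrow> psp \<Rightarrow> int" where
  "uP n \<sigma> = (\<Sum>bs\<in>{bs\<in>OL n. psi n bs = \<sigma>}. (-1) ^ length bs)"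

lemma sum_uP_above:
  assumes pi: "\<pi> \<in> PiP n"
  shows "(\<Sum>\<sigma>\<in>{\<sigma>\<in>PiP n. psp_le \<pi> \<sigma>}. uP n \<sigma>) = (if \<pi> = PiP_top n then 1 else 0)"
proof -
  have "(\<Sum>\<sigma>\<in>{\<sigma>\<in>PiP n. psp_le \<pi> \<sigma>}. uP n \<sigma>)
     = (\<Sum>\<sigma>\<in>{\<sigma>\<in>PiP n. psp_le \<pi> \<sigma>}. \<Sum>bs\<in>{bs\<in>{bs\<in>OL n. psp_le \<pi> (psi n bs)}. psi n bs = \<sigma>}. (-1) ^ length bs)"
    unfolding uP_def by (rule sum.cong) (auto intro!: sum.cong)
  also have "\<dots> = (\<Sum>bs\<in>{bs\<in>OL n. psp_le \<pi> (psi n bs)}. (-1) ^ length bs)"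
    by (rule sum.group) (auto simp: finite_OL finite_PiP psi_PiP)
  finally show ?thesis using sum_coarse[OF pi] by simp
qed

lemma sum_uP_group:
  assumes "G \<subseteq> PiP n"
  shows "(\<Sum>\<sigma>\<in>G. uP n \<sigma>) = (\<Sum>bs\<in>{bs\<in>OL n. psi n bs \<in> G}. (-1) ^ length bs)"
proof -
  have "(\<Sum>\<sigma>\<in>G. uP n \<sigma>)
     = (\<Sum>\<sigma>\<in>G. \<Sum>bs\<in>{bs\<in>{bs\<in>OL n. psi n bs \<in> G}. psi n bs = \<sigma>}. (-1) ^ length bs)"
    unfolding uP_def by (rule sum.cong) (auto intro!: sum.cong)
  also have "\<dots> = (\<Sum>bs\<in>{bs\<in>OL n. psi n bs \<in> G}. (-1) ^ length bs)"
    using assms finite_subset[OF assms finite_PiP] by (intro sum.group) (auto simp: finite_OL)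
  finally show ?thesis .
qed


lemma porder_on_subset: "porder_on Q le \<Longrightarrow> P \<subseteq> Q \<Longrightarrow> porder_on P le"
  unfolding porder_on_def by blast

lemma PiP_props:
  assumes "(s, Z) \<in> PiP n"
  shows "Z \<subseteq> {1..n}" "\<Union>s = {1..n} - Z" "disjoint s" "{} \<notin> s" "finite s"
    "\<And>b. b \<in> s \<Longrightarrow> b \<noteq> {} \<and> b \<subseteq> {1..n} \<and> b \<inter> Z = {} \<and> finite b"
proof -
  have p: "partition_on ({1..n} - Z) s" and z: "Z \<subseteq> {1..n}" using assms unfolding PiP_def by auto
  show "Z \<subseteq> {1..n}" "\<Union>s = {1..n} - Z" "disjoint s" "{} \<notin> s"
    using p z unfolding partition_on_def by auto
  show "finite s" using p by (rule finite_elements[rotated]) simp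
  fix b assume "b \<in> s"
  then have "b \<noteq> {} \<and> b \<subseteq> {1..n} \<and> b \<inter> Z = {}"
    using p unfolding partition_on_def by auto
  moreover have "finite b" if "b \<subseteq> {1..n}" using that by (rule finite_subset) simp
  ultimately show "b \<noteq> {} \<and> b \<subseteq> {1..n} \<and> b \<inter> Z = {} \<and> finite b" by simp
qed

lemma porder_PiP: "porder_on (PiP n) psp_le"
  unfolding porder_on_def
proof (intro conjI ballI impI)
  fix x assume "x \<in> PiP n" then show "psp_le x x" unfolding psp_le_def by auto
next
  fix x y z assume xy: "psp_le x y" and yz: "psp_le y z"
  have 1: "\<forall>B\<in>fst x. (\<exists>B'\<in>fst y. B \<subseteq> B') \<or> B \<subseteq> snd y" "snd x \<subseteq> snd y"
    using xy unfolding psp_le_def by auto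
  have 2: "\<forall>B\<in>fst y. (\<exists>B'\<in>fst z. B \<subseteq> B') \<or> B \<subseteq> snd z" "snd y \<subseteq> snd z"
    using yz unfolding psp_le_def by auto
  have "(\<exists>B'\<in>fst z. B \<subseteq> B') \<or> B \<subseteq> snd z" if B: "B \<in> fst x" for B
  proof -
    from 1(1) B have "(\<exists>B'\<in>fst y. B \<subseteq> B') \<or> B \<subseteq> snd y" by blast
    then show ?thesis
    proof
      assume "\<exists>B'\<in>fst y. B \<subseteq> B'"
      then obtain B' where B': "B' \<in> fst y" "B \<subseteq> B'" by blast
      from 2(1) B'(1) have "(\<exists>B''\<in>fst z. B' \<subseteq> B'') \<or> B' \<subseteq> snd z" by blast
      then show ?thesis using B'(2) by (meson order_trans)
    next
      assume "B \<subseteq> snd y" then show ?thesis using 2(2) by blast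
    qed
  qed
  then show "psp_le x z" unfolding psp_le_def using 1(2) 2(2) by blast
next
  fix x y assume x: "x \<in> PiP n" and y: "y \<in> PiP n" and xy: "psp_le x y" and yx: "psp_le y x"
  obtain s Z where sZ: "x = (s, Z)" by (cases x)
  obtain s' Z' where sZ': "y = (s', Z')" by (cases y)
  note px = PiP_props[OF x[unfolded sZ]] and py = PiP_props[OF y[unfolded sZ']]
  have ZZ: "Z = Z'" using xy yx sZ sZ' unfolding psp_le_def by auto
  have sub: "B \<in> t'" if t: "(t, W) \<in> PiP n" "(t', W) \<in> PiP n" and le: "psp_le (t, W) (t', W)"
     and le2: "psp_le (t', W) (t, W)" and B: "B \<in> t" for t t' W B
  proof -
    note pt = PiP_props[OF t(1)] and pt' = PiP_props[OF t(2)]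
    have Bp: "B \<noteq> {}" "B \<inter> W = {}" using pt(6)[OF B] by auto
    have "(\<exists>B'\<in>t'. B \<subseteq> B') \<or> B \<subseteq> W" using le B unfolding psp_le_def by auto
    then obtain B' where B': "B' \<in> t'" "B \<subseteq> B'" using Bp by blast
    have B'p: "B' \<noteq> {}" "B' \<inter> W = {}" using pt'(6)[OF B'(1)] by auto
    have "(\<exists>B''\<in>t. B' \<subseteq> B'') \<or> B' \<subseteq> W" using le2 B'(1) unfolding psp_le_def by auto
    then obtain B'' where B'': "B'' \<in> t" "B' \<subseteq> B''" using B'p by blast
    have "B = B''"
    proof (rule ccontr)
      assume "B \<noteq> B''"
      then have "B \<inter> B'' = {}" using disjointD[OF pt(3) B B''(1)] by simp
      then show False using B' B'' Bp by blast
    qed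
    then show ?thesis using B' B'' by auto
  qed
  have "s \<subseteq> s'" using sub[of s Z s'] x y xy yx sZ sZ' ZZ by auto
  moreover have "s' \<subseteq> s" using sub[of s' Z s] x y xy yx sZ sZ' ZZ by auto
  ultimately show "x = y" using sZ sZ' ZZ by auto
qed

lemma sum_mset_singletons: "sum_mset (\<Sum>x\<in>A. {#f x#}) = sum f A"
  by (induction A rule: infinite_finite_induct) auto

lemma size_singletons: "finite A \<Longrightarrow> size (\<Sum>x\<in>A. {#f x#}) = card A"
  by (induction A rule: finite_induct) auto

lemma mset_set_sum: "finite A \<Longrightarrow> image_mset f (mset_set A) = (\<Sum>x\<in>A. {#f x#})"
  by (induction A rule: finite_induct) auto

lemma psp_type_IP:
  assumes "(s, Z) \<in> PiP n"
  shows "psp_type (s, Z) \<in> IP n"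
proof -
  note p = PiP_props[OF assms]
  have "\<forall>x\<in>#image_mset card (mset_set s). 0 < x"
    using p(5,6) by (auto simp: card_gt_0_iff)
  moreover have "card (\<Union>s) = sum card s" using p by (intro card_Union_disjoint) auto
  then have "sum_mset (image_mset card (mset_set s)) = card (\<Union>s)"
    by (simp add: sum_unfold_sum_mset[symmetric])
  moreover have "card (\<Union>s) + card Z = n"
    using p(1,2) by (simp add: card_Diff_subset finite_subset le_add_diff_inverse2 card_mono[of "{1..n}" Z, simplified])
  ultimately show ?thesis unfolding IP_def psp_type_def by auto
qed

lemma ip_cover_add:
  assumes "ip_cover x y"
  shows "ip_cover (fst x + K, snd x) (fst y + K, snd y)"
  using assms
proof cases
  case (merge l a b m)
  then show ?thesis using ip_cover.merge[of "l + K" a b m] by (simp add: ac_simps)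
next
  case (point l a m)
  then show ?thesis using ip_cover.point[of "l + K" a m] by (simp add: ac_simps)
qed

lemma ip_le_add:
  assumes "ip_le x y"
  shows "ip_le (fst x + K, snd x) (fst y + K, snd y)"
  using assms unfolding ip_le_def
proof (induction rule: rtranclp_induct)
  case base then show ?case by simp
next
  case (step y z)
  then show ?case using ip_cover_add[OF step(2), of K] by (simp add: rtranclp.rtrancl_into_rtrancl)
qed

lemma ip_le_trans: "ip_le x y \<Longrightarrow> ip_le y z \<Longrightarrow> ip_le x z"
  unfolding ip_le_def by simp

lemma ip_le_merge_all:
  "K \<noteq> {#} \<Longrightarrow> ip_le (L + K, m) (L + {#sum_mset K#}, m)"
proof (induction K arbitrary: L rule: multiset_induct)
  case empty then show ?case by simp
next
  case (add b K)
  show ?case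
  proof (cases "K = {#}")
    case True then show ?thesis by (simp add: ip_le_def)
  next
    case False
    have "ip_le ((L + {#b#}) + K, m) ((L + {#b#}) + {#sum_mset K#}, m)" using add.IH[OF False] .
    moreover have "ip_cover (L + {#sum_mset K, b#}, m) (L + {#sum_mset K + b#}, m)"
      by (rule ip_cover.merge)
    ultimately show ?thesis unfolding ip_le_def
      by (simp add: ac_simps rtranclp.rtrancl_into_rtrancl)
  qed
qed

lemma ip_le_point_all: "ip_le (L + K, m) (L, sum_mset K + m)"
proof (induction K arbitrary: m rule: multiset_induct)
  case empty then show ?case by (simp add: ip_le_def)
next
  case (add b K)
  have "ip_cover (L + K + {#b#}, m) (L + K, b + m)" by (rule ip_cover.point)
  then have "ip_le (L + add_mset b K, m) (L + K, b + m)" by (simp add: ip_le_def)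
  moreover have "ip_le (L + K, b + m) (L, sum_mset K + (b + m))" by (rule add.IH)
  ultimately show ?case using ip_le_trans by (simp add: ac_simps)
qed

lemma ip_le_trans': "ip_le x y \<Longrightarrow> ip_le y z \<Longrightarrow> ip_le x z"
  by (rule ip_le_trans)

lemma ip_le_groups:
  assumes "finite I" "\<forall>i\<in>I. K i \<noteq> {#}"
  shows "ip_le (L + (\<Sum>i\<in>I. K i), m) (L + (\<Sum>i\<in>I. {#sum_mset (K i)#}), m)"
  using assms
proof (induction I arbitrary: L rule: finite_induct)
  case empty then show ?case by (simp add: ip_le_def)
next
  case (insert i I)
  have "ip_le ((L + K i) + (\<Sum>i\<in>I. K i), m) ((L + K i) + (\<Sum>i\<in>I. {#sum_mset (K i)#}), m)"
    using insert by simp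
  moreover have "ip_le ((L + (\<Sum>i\<in>I. {#sum_mset (K i)#})) + K i, m)
       ((L + (\<Sum>i\<in>I. {#sum_mset (K i)#})) + {#sum_mset (K i)#}, m)"
    using insert by (intro ip_le_merge_all) simp
  ultimately show ?case using insert by (simp add: ac_simps ip_le_trans)
qed

lemma psp_type_mono:
  assumes x: "(s, Z) \<in> PiP n" and y: "(s', Z') \<in> PiP n" and le: "psp_le (s, Z) (s', Z')"
  shows "ip_le (psp_type (s, Z)) (psp_type (s', Z'))"
proof -
  note px = PiP_props[OF x] and py = PiP_props[OF y]
  have cov: "\<And>b. b \<in> s \<Longrightarrow> (\<exists>B'\<in>s'. b \<subseteq> B') \<or> b \<subseteq> Z'" and ZZ: "Z \<subseteq> Z'"
    using le unfolding psp_le_def by auto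
  define G where "G B' = {b\<in>s. b \<subseteq> B'}" for B'
  define G0 where "G0 = {b\<in>s. b \<subseteq> Z'}"
  have finG: "finite (G B')" for B' using px(5) unfolding G_def by simp
  have finG0: "finite G0" using px(5) unfolding G0_def by simp
  have s_eq: "s = (\<Union>B'\<in>s'. G B') \<union> G0" using cov unfolding G_def G0_def by blast
  have Gdisj: "G B1 \<inter> G B2 = {}" if "B1 \<in> s'" "B2 \<in> s'" "B1 \<noteq> B2" for B1 B2
  proof -
    have "B1 \<inter> B2 = {}" using disjointD[OF py(3) that] .
    then show ?thesis unfolding G_def using px(6) by blast
  qed
  have G0disj: "(\<Union>B'\<in>s'. G B') \<inter> G0 = {}"
    unfolding G_def G0_def using px(6) py(6) by blast
  have Bunion: "B' = \<Union>(G B')" if B': "B' \<in> s'" for B'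
  proof
    show "\<Union>(G B') \<subseteq> B'" unfolding G_def by blast
    show "B' \<subseteq> \<Union>(G B')"
    proof
      fix y assume yB: "y \<in> B'"
      then have "y \<in> \<Union>s" using py(6)[OF B'] px(2) ZZ by blast
      then obtain b where b: "b \<in> s" "y \<in> b" by blast
      from cov[OF b(1)] show "y \<in> \<Union>(G B')"
      proof
        assume "\<exists>B''\<in>s'. b \<subseteq> B''"
        then obtain B'' where B'': "B'' \<in> s'" "b \<subseteq> B''" by blast
        then have "B'' = B'" using yB b disjointD[OF py(3) B'' (1) B'] by blast
        then show ?thesis using B'' b unfolding G_def by blast
      next
        assume "b \<subseteq> Z'" then show ?thesis using yB b py(6)[OF B'] by blast
      qed
    qed
  qed
  have Gne: "G B' \<noteq> {}" if "B' \<in> s'" for B' using Bunion[OF that] py(6)[OF that] by auto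
  have Z'eq: "Z' = Z \<union> \<Union>G0"
  proof
    show "Z \<union> \<Union>G0 \<subseteq> Z'" using ZZ unfolding G0_def by blast
    show "Z' \<subseteq> Z \<union> \<Union>G0"
    proof
      fix y assume yZ: "y \<in> Z'"
      show "y \<in> Z \<union> \<Union>G0"
      proof (cases "y \<in> Z")
        case False
        then have "y \<in> \<Union>s" using yZ py(1) px(2) by blast
        then obtain b where b: "b \<in> s" "y \<in> b" by blast
        from cov[OF b(1)] have "b \<subseteq> Z'"
        proof
          assume "\<exists>B''\<in>s'. b \<subseteq> B''"
          then obtain B'' where "B'' \<in> s'" "b \<subseteq> B''" by blast
          then show ?thesis using yZ b py(6) by blast
        qed
        then show ?thesis using b unfolding G0_def by blast
      qed simp
    qed
  qed
  have cardZ': "card Z' = card Z + (\<Sum>b\<in>G0. card b)"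
  proof -
    have "card (\<Union>G0) = (\<Sum>b\<in>G0. card b)"
      using px(3,6) unfolding G0_def by (intro card_Union_disjoint) (auto simp: disjoint_def)
    moreover have "Z \<inter> \<Union>G0 = {}" using px(6) unfolding G0_def by blast
    moreover have "finite Z" "finite (\<Union>G0)" using px(1) py(1) Z'eq by (auto intro: finite_subset)
    ultimately show ?thesis using Z'eq by (simp add: card_Un_disjoint)
  qed
  have cardB: "card B' = (\<Sum>b\<in>G B'. card b)" if "B' \<in> s'" for B'
  proof -
    have "card (\<Union>(G B')) = (\<Sum>b\<in>G B'. card b)"
      using px(3,6) unfolding G_def by (intro card_Union_disjoint) (auto simp: disjoint_def)
    then show ?thesis using Bunion[OF that] by simp
  qed
  define K where "K B' = (\<Sum>b\<in>G B'. {#card b#})" for B'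
  define K0 where "K0 = (\<Sum>b\<in>G0. {#card b#})"
  have ts: "image_mset card (mset_set s) = K0 + (\<Sum>B'\<in>s'. K B')"
  proof -
    have "image_mset card (mset_set s) = (\<Sum>b\<in>s. {#card b#})" using px(5) by (rule mset_set_sum)
    also have "\<dots> = (\<Sum>b\<in>(\<Union>B'\<in>s'. G B'). {#card b#}) + (\<Sum>b\<in>G0. {#card b#})"
      using s_eq G0disj finG finG0 py(5) by (subst s_eq) (intro sum.union_disjoint, auto)
    also have "(\<Sum>b\<in>(\<Union>B'\<in>s'. G B'). {#card b#}) = (\<Sum>B'\<in>s'. K B')"
      unfolding K_def using py(5) finG Gdisj by (intro sum.UNION_disjoint) auto
    finally show ?thesis unfolding K0_def by (simp add: ac_simps)
  qed
  have ts': "image_mset card (mset_set s') = (\<Sum>B'\<in>s'. {#sum_mset (K B')#})"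
  proof -
    have "image_mset card (mset_set s') = (\<Sum>B'\<in>s'. {#card B'#})" using py(5) by (rule mset_set_sum)
    also have "\<dots> = (\<Sum>B'\<in>s'. {#sum_mset (K B')#})"
    proof (rule sum.cong, simp)
      fix B' assume "B' \<in> s'"
      then show "{#card B'#} = {#sum_mset (K B')#}"
        unfolding K_def using cardB by (simp add: sum_mset_singletons)
    qed
    finally show ?thesis .
  qed
  have K0s: "sum_mset K0 = (\<Sum>b\<in>G0. card b)"
    unfolding K0_def by (rule sum_mset_singletons)
  have "ip_le (K0 + (\<Sum>B'\<in>s'. K B'), card Z) (K0 + (\<Sum>B'\<in>s'. {#sum_mset (K B')#}), card Z)"
  proof (rule ip_le_groups[OF py(5)])
    show "\<forall>i\<in>s'. K i \<noteq> {#}"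
    proof
      fix B' assume "B' \<in> s'"
      then have "size (K B') \<noteq> 0" unfolding K_def using Gne finG by (simp add: size_singletons)
      then show "K B' \<noteq> {#}" by auto
    qed
  qed
  moreover have "ip_le ((\<Sum>B'\<in>s'. {#sum_mset (K B')#}) + K0, card Z)
      ((\<Sum>B'\<in>s'. {#sum_mset (K B')#}), sum_mset K0 + card Z)"
    by (rule ip_le_point_all)
  ultimately show ?thesis
    unfolding psp_type_def fst_conv snd_conv ts ts' cardZ' K0s
    by (simp add: ac_simps ip_le_trans)
qed


abbreviation cds where "cds \<equiv> comp_descent_set"

lemma cds_cons: "cds (a # c) = (if c = [] then {} else insert a ((+) a ` cds c))"
proof (cases "c = []")
  case True then show ?thesis unfolding comp_descent_set_def by auto
next
  case False
  have "x \<in> cds (a # c) \<longleftrightarrow> x \<in> insert a ((+) a ` cds c)" for x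
  proof
    assume "x \<in> cds (a # c)"
    then obtain j where j: "x = sum_list (take j (a # c))" "1 \<le> j" "j < length (a # c)"
      unfolding comp_descent_set_def by blast
    show "x \<in> insert a ((+) a ` cds c)"
    proof (cases "j = 1")
      case True then show ?thesis using j by simp
    next
      case False
      then obtain j' where j': "j = Suc j'" "1 \<le> j'" using j(2) by (cases j) auto
      then have "x = a + sum_list (take j' c)" "j' < length c" using j by auto
      then show ?thesis unfolding comp_descent_set_def using j' by blast
    qed
  next
    assume "x \<in> insert a ((+) a ` cds c)"
    then show "x \<in> cds (a # c)"
    proof
      assume "x = a"
      then have "x = sum_list (take 1 (a # c)) \<and> 1 \<le> (1::nat) \<and> 1 < length (a # c)" using False by simp
      then show ?thesis unfolding comp_descent_set_def by blast
    next
      assume "x \<in> (+) a ` cds c"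
      then obtain j where j: "x = a + sum_list (take j c)" "1 \<le> j" "j < length c"
        unfolding comp_descent_set_def by blast
      then have "x = sum_list (take (Suc j) (a # c)) \<and> 1 \<le> Suc j \<and> Suc j < length (a # c)" by simp
      then show ?thesis unfolding comp_descent_set_def by blast
    qed
  qed
  then have "cds (a # c) = insert a ((+) a ` cds c)" by blast
  then show ?thesis using False by simp
qed

lemma cds_Nil: "cds [] = {}" unfolding comp_descent_set_def by auto

lemma finite_cds: "finite (cds c)"
proof -
  have "cds c \<subseteq> (\<lambda>j. sum_list (take j c)) ` {..<length c}" unfolding comp_descent_set_def by auto
  then show ?thesis by (rule finite_subset) simp
qed

definition pos_bl :: "nat list \<Rightarrow> bool" where
  "pos_bl c \<longleftrightarrow> (\<forall>x\<in>set (butlast c). 0 < x)"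

lemma pos_bl_cons: "c \<noteq> [] \<Longrightarrow> pos_bl (a # c) \<longleftrightarrow> 0 < a \<and> pos_bl c"
  unfolding pos_bl_def by auto

lemma cds_pos: "pos_bl c \<Longrightarrow> x \<in> cds c \<Longrightarrow> 0 < x"
proof (induction c arbitrary: x)
  case Nil then show ?case by (simp add: cds_Nil)
next
  case (Cons a c)
  show ?case
  proof (cases "c = []")
    case True then show ?thesis using Cons by (simp add: cds_cons)
  next
    case False
    then show ?thesis using Cons pos_bl_cons[OF False] by (auto simp: cds_cons)
  qed
qed

lemma card_cds: "pos_bl c \<Longrightarrow> card (cds c) = length c - 1"
proof (induction c)
  case Nil then show ?case by (simp add: cds_Nil)
next
  case (Cons a c)
  show ?case
  proof (cases "c = []")
    case True then show ?thesis by (simp add: cds_cons)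
  next
    case False
    have p: "pos_bl c" using Cons.prems pos_bl_cons[OF False] by simp
    have "a \<notin> (+) a ` cds c" using cds_pos[OF p, of 0] by auto
    then have "card (cds (a # c)) = Suc (card (cds c))"
      using False finite_cds by (simp add: cds_cons card_image)
    then show ?thesis using Cons.IH[OF p] False by simp
  qed
qed

lemma cds_inj:
  assumes "pos_bl c" "pos_bl d" "c \<noteq> []" "d \<noteq> []" "sum_list c = sum_list d" "cds c = cds d"
  shows "c = d"
  using assms
proof (induction c arbitrary: d)
  case Nil then show ?case by simp
next
  case (Cons a c)
  obtain b d' where d: "d = b # d'" using Cons.prems(4) by (cases d) auto
  show ?case
  proof (cases "c = []")
    case True
    then have "cds d = {}" using Cons.prems by (simp add: cds_cons)
    then have "d' = []" using d by (auto simp: cds_cons split: if_splits)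
    then show ?thesis using True Cons.prems d by simp
  next
    case False
    have "cds (a # c) \<noteq> {}" using False by (simp add: cds_cons)
    then have "cds d \<noteq> {}" using Cons.prems(6) by simp
    then have d'ne: "d' \<noteq> []" using d by (auto simp: cds_cons)
    have pc: "pos_bl c" using Cons.prems(1) pos_bl_cons[OF False] by simp
    have pd: "pos_bl d'" using Cons.prems(2) pos_bl_cons[OF d'ne] d by simp
    have eq: "insert a ((+) a ` cds c) = insert b ((+) b ` cds d')"
      using Cons.prems(6) d False d'ne by (simp add: cds_cons)
    have ab: "a = b"
    proof (rule ccontr)
      assume "a \<noteq> b"
      have "a \<in> (+) b ` cds d'" using eq \<open>a \<noteq> b\<close> by blast
      then have "a > b" using cds_pos[OF pd] by auto
      moreover have "b \<in> insert a ((+) a ` cds c)" using eq by simp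
      then have "b \<in> (+) a ` cds c" using \<open>a \<noteq> b\<close> by simp
      then have "b > a" using cds_pos[OF pc] by auto
      ultimately show False by simp
    qed
    have "a \<notin> (+) a ` cds c" "a \<notin> (+) a ` cds d'" using cds_pos[OF pc, of 0] cds_pos[OF pd, of 0] by auto
    then have "(+) a ` cds c = (+) a ` cds d'" using eq ab by (metis Diff_insert_absorb)
    then have "cds c = cds d'" by (simp add: inj_image_eq_iff)
    then have "c = d'" using Cons.IH[OF pc pd False d'ne] Cons.prems(5) d ab by simp
    then show ?thesis using d ab by simp
  qed
qed

lemma CP_iff: "c \<in> CP n \<longleftrightarrow> c \<noteq> [] \<and> sum_list c = n \<and> pos_bl c"
  unfolding CP_def pos_bl_def by auto

lemma cds_merge: "cds (xs @ (a + b) # ys) \<subseteq> cds (xs @ a # b # ys)"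
proof (induction xs)
  case Nil
  then show ?case by (auto simp: cds_cons)
next
  case (Cons x xs)
  then show ?case by (auto simp: cds_cons)
qed

lemma comp_cover_props:
  assumes "comp_cover x y" "pos_bl x"
  shows "pos_bl y \<and> y \<noteq> [] \<and> sum_list y = sum_list x \<and> cds y \<subseteq> cds x \<and> length y < length x"
  using assms(1)
proof cases
  case (1 xs a b ys)
  have "pos_bl y"
    using assms(2) unfolding 1 pos_bl_def by (cases ys) (auto simp: butlast_append)
  then show ?thesis using 1 cds_merge by simp
qed

lemma comp_le_props:
  assumes "comp_le z x" "pos_bl z" "z \<noteq> []"
  shows "pos_bl x \<and> x \<noteq> [] \<and> sum_list x = sum_list z \<and> cds x \<subseteq> cds z \<and> (x = z \<or> length x < length z)"
  using assms(1) unfolding comp_le_def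
proof (induction rule: rtranclp_induct)
  case base then show ?case using assms by simp
next
  case (step y x)
  then show ?case using comp_cover_props[OF step(2)] by auto
qed

lemma comp_le_len: "comp_le x y \<Longrightarrow> x = y \<or> length y < length x"
  unfolding comp_le_def
proof (induction rule: rtranclp_induct)
  case (step y z)
  then show ?case by (auto elim: comp_cover.cases)
qed simp

lemma comp_le_Cons: "comp_le x y \<Longrightarrow> comp_le (a # x) (a # y)"
  unfolding comp_le_def
proof (induction rule: rtranclp_induct)
  case (step y z)
  from step(2) have "comp_cover (a # y) (a # z)"
  proof cases
    case (1 xs p q ys)
    then show ?thesis using comp_cover.intros[of "a # xs" p q ys] by simp
  qed
  then show ?case using step(3) by simp
qed simp

lemma cds_surj:
  assumes "pos_bl z" "z \<noteq> []" "S \<subseteq> cds z"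
  shows "\<exists>x. comp_le z x \<and> cds x = S"
  using assms
proof (induction z arbitrary: S)
  case Nil then show ?case by simp
next
  case (Cons a z')
  show ?case
  proof (cases "z' = []")
    case True
    then have "S = {}" using Cons.prems by (simp add: cds_cons)
    then show ?thesis using True by (intro exI[of _ "[a]"]) (simp add: comp_le_def cds_cons)
  next
    case False
    have p: "pos_bl z'" using Cons.prems(1) pos_bl_cons[OF False] by simp
    define T where "T = {y\<in>cds z'. a + y \<in> S}"
    have ST: "S - {a} = (+) a ` T" using Cons.prems(3) False cds_pos[OF p, of 0] unfolding T_def by (auto simp: cds_cons)
    obtain x' where x': "comp_le z' x'" "cds x' = T"
      using Cons.IH[OF p False, of T] unfolding T_def by blast
    have x'ne: "x' \<noteq> []" using comp_le_props[OF x'(1) p False] by simp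
    show ?thesis
    proof (cases "a \<in> S")
      case True
      have "cds (a # x') = S" using x' x'ne ST True by (auto simp: cds_cons)
      then show ?thesis using comp_le_Cons[OF x'(1)] by blast
    next
      case False
      obtain h t where ht: "x' = h # t" using x'ne by (cases x') auto
      have cov: "comp_cover (a # h # t) ((a + h) # t)" using comp_cover.intros[of "[]" a h t] by simp
      have "comp_le (a # z') ((a + h) # t)"
        using comp_le_Cons[OF x'(1), of a] cov ht unfolding comp_le_def by simp
      moreover have "cds ((a + h) # t) = (+) a ` cds x'"
        unfolding ht by (simp add: cds_cons image_image add.assoc)
      then have "cds ((a + h) # t) = S" using x' ST False by auto
      ultimately show ?thesis by blast
    qed
  qed
qed

lemma len_le_sum: "\<forall>x\<in>set xs. 0 < x \<Longrightarrow> length xs \<le> sum_list (xs::nat list)"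
  by (induction xs) (auto simp: Suc_le_eq)

lemma finite_CP: "finite (CP n)"
proof (rule finite_subset)
  show "CP n \<subseteq> {xs. set xs \<subseteq> {0..n} \<and> length xs \<le> Suc n}"
  proof
    fix c assume c: "c \<in> CP n"
    then have ne: "c \<noteq> []" and s: "sum_list c = n" and p: "\<forall>x\<in>set (butlast c). 0 < x"
      unfolding CP_def by auto
    have "set c \<subseteq> {0..n}" using s member_le_sum_list[of _ c] by fastforce
    moreover have "length (butlast c) \<le> sum_list (butlast c)"
      using p len_le_sum by blast
    moreover have "sum_list (butlast c) \<le> n" using s ne by (metis append_butlast_last_id le_add1 sum_list_append)
    ultimately show "c \<in> {xs. set xs \<subseteq> {0..n} \<and> length xs \<le> Suc n}" by auto
  qed
  show "finite {xs. set xs \<subseteq> {0..n} \<and> length xs \<le> Suc n}" by (rule finite_lists_length_le) simp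
qed


lemma porder_CP: "porder_on (CP n) comp_le"
  unfolding porder_on_def
proof (intro conjI ballI impI)
  fix x show "comp_le x x" unfolding comp_le_def by simp
next
  fix x y z assume "comp_le x y" "comp_le y z" then show "comp_le x z" unfolding comp_le_def by simp
next
  fix x y assume a: "comp_le x y" and b: "comp_le y x"
  then show "x = y" using comp_le_len[OF a] comp_le_len[OF b] by auto
qed

lemma sum_butlast_last: "c \<noteq> [] \<Longrightarrow> sum_list (butlast c) + last c = sum_list (c::nat list)"
  by (metis append_butlast_last_id sum_list_append sum_list.Cons sum_list.Nil add_0_right)

lemma comp_type_IP: "c \<in> CP n \<Longrightarrow> comp_type c \<in> IP n"
  unfolding CP_def IP_def comp_type_def using sum_butlast_last[of c] by (auto simp: sum_mset_sum_list)

lemma comp_type_cover: "comp_cover x y \<Longrightarrow> ip_cover (comp_type x) (comp_type y)"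
proof (induction rule: comp_cover.induct)
  case (1 xs a b ys)
  show ?case
  proof (cases "ys = []")
    case True
    then show ?thesis using ip_cover.point[of "mset xs" a b]
      by (simp add: comp_type_def butlast_append ac_simps)
  next
    case False
    then show ?thesis using ip_cover.merge[of "mset xs + mset (butlast ys)" a b "last ys"]
      by (simp add: comp_type_def butlast_append ac_simps)
  qed
qed

lemma comp_type_mono: "comp_le x y \<Longrightarrow> ip_le (comp_type x) (comp_type y)"
  unfolding comp_le_def ip_le_def
proof (induction rule: rtranclp_induct)
  case (step y z)
  then show ?case using comp_type_cover[OF step(2)] by simp
qed simp

lemma descents_sub: "descents t n \<subseteq> {1..<n}" unfolding descents_def by auto

lemma beta_eq:
  assumes z: "z \<in> CP n"
  shows "beta z = int (card {t. t permutes {1..n} \<and> descents t n = cds z})"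
proof -
  have ne: "z \<noteq> []" and s: "sum_list z = n" using z unfolding CP_def by auto
  show ?thesis
  proof (cases "last z > 0")
    case True then show ?thesis unfolding beta_def using s by simp
  next
    case False
    then have l0: "last z = 0" by simp
    show ?thesis
    proof (cases "length z \<ge> 2")
      case True
      have "sum_list (take (length z - 1) z) = n"
        using sum_butlast_last[OF ne] l0 s by (simp add: butlast_conv_take)
      then have "n \<in> cds z" unfolding comp_descent_set_def using True
        by (intro CollectI exI[of _ "length z - 1"]) auto
      then have e: "{t. t permutes {1..n} \<and> descents t n = cds z} = {}" using descents_sub by fastforce
      show ?thesis unfolding beta_def e using l0 True by simp
    next
      case False
      then have "length z = 1" using ne by (cases z) (auto simp: not_le)
      then have zz: "z = [0]" using l0 by (cases z) auto
      then have n0: "n = 0" using s by simp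
      have "cds z = {}" using zz by (simp add: cds_cons)
      moreover have "{t. t permutes {1..0::nat} \<and> descents t 0 = {}} = {id}"
        by (auto simp: descents_def permutes_empty)
      ultimately show ?thesis unfolding beta_def using zz n0 by simp
    qed
  qed
qed


declare upt_Suc[simp del]

definition asc :: "nat set \<Rightarrow> nat list \<Rightarrow> bool" where
  "asc S L \<longleftrightarrow> (\<forall>i. Suc i < length L \<longrightarrow> Suc i \<notin> S \<longrightarrow> L ! i \<le> L ! Suc i)"

lemma descents_asc: "descents t n \<subseteq> S \<longleftrightarrow> asc S (map t [1..<Suc n])"
proof
  assume d: "descents t n \<subseteq> S"
  show "asc S (map t [1..<Suc n])" unfolding asc_def
  proof (intro allI impI)
    fix i assume i: "Suc i < length (map t [1..<Suc n])" "Suc i \<notin> S"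
    then have "Suc i \<notin> descents t n" using d by blast
    then have "t (Suc i) \<le> t (Suc (Suc i))" using i(1) unfolding descents_def by auto
    then show "map t [1..<Suc n] ! i \<le> map t [1..<Suc n] ! Suc i" using i(1) by (simp add: nth_map_upt)
  qed
next
  assume a: "asc S (map t [1..<Suc n])"
  show "descents t n \<subseteq> S"
  proof
    fix k assume k: "k \<in> descents t n"
    then obtain i where i: "k = Suc i" "Suc i < n" "t (Suc i) > t (Suc (Suc i))"
      unfolding descents_def by (cases k) auto
    show "k \<in> S"
    proof (rule ccontr)
      assume "k \<notin> S"
      then have "map t [1..<Suc n] ! i \<le> map t [1..<Suc n] ! Suc i" using a i unfolding asc_def by auto
      then show False using i by (simp add: nth_map_upt)
    qed
  qed
qed

lemma perm_list_card:
  "card {t. t permutes {1..n} \<and> descents t n \<subseteq> S} = card {L. distinct L \<and> set L = {1..n} \<and> asc S L}"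
proof (rule bij_betw_same_card)
  define g where "g L = (\<lambda>i. if i \<in> {1..n} then L ! (i - 1) else i)" for L :: "nat list"
  show "bij_betw (\<lambda>t. map t [1..<Suc n]) {t. t permutes {1..n} \<and> descents t n \<subseteq> S} {L. distinct L \<and> set L = {1..n} \<and> asc S L}"
  proof (rule bij_betw_byWitness[where f' = g])
    show "\<forall>t\<in>{t. t permutes {1..n} \<and> descents t n \<subseteq> S}. g (map t [1..<Suc n]) = t"
    proof
      fix t assume "t \<in> {t. t permutes {1..n} \<and> descents t n \<subseteq> S}"
      then have p: "t permutes {1..n}" by simp
      show "g (map t [1..<Suc n]) = t"
      proof
        fix i show "g (map t [1..<Suc n]) i = t i"
          using permutes_not_in[OF p, of i] unfolding g_def by (auto simp: nth_map_upt)
      qed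
    qed
    show "\<forall>L\<in>{L. distinct L \<and> set L = {1..n} \<and> asc S L}. map (g L) [1..<Suc n] = L"
    proof
      fix L assume "L \<in> {L. distinct L \<and> set L = {1..n} \<and> asc S L}"
      then have len: "length L = n" using distinct_card[of L] by auto
      show "map (g L) [1..<Suc n] = L"
        by (rule nth_equalityI) (auto simp: len g_def nth_map_upt)
    qed
    show "(\<lambda>t. map t [1..<Suc n]) ` {t. t permutes {1..n} \<and> descents t n \<subseteq> S} \<subseteq> {L. distinct L \<and> set L = {1..n} \<and> asc S L}"
    proof safe
      fix t assume p: "t permutes {1..n}" and d: "descents t n \<subseteq> S"
      show "distinct (map t [1..<Suc n])" using permutes_inj_on[OF p] by (simp add: distinct_map)
      show "asc S (map t [1..<Suc n])" using d descents_asc by blast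
      have "set (map t [1..<Suc n]) = t ` {1..n}" by auto
      then show "x \<in> {1..n}" if "x \<in> set (map t [1..<Suc n])" for x
        using that permutes_image[OF p] by auto
      show "x \<in> set (map t [1..<Suc n])" if "x \<in> {1..n}" for x
        using that permutes_image[OF p] \<open>set (map t [1..<Suc n]) = t ` {1..n}\<close> by auto
    qed
    show "g ` {L. distinct L \<and> set L = {1..n} \<and> asc S L} \<subseteq> {t. t permutes {1..n} \<and> descents t n \<subseteq> S}"
    proof
      fix t0 assume "t0 \<in> g ` {L. distinct L \<and> set L = {1..n} \<and> asc S L}"
      then obtain L where t0: "t0 = g L" and dL: "distinct L" and sL: "set L = {1..n}" and aL: "asc S L"
        by blast
      have len: "length L = n" using distinct_card[OF dL] sL by simp
      have bij: "bij_betw (g L) {1..n} {1..n}"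
      proof (rule bij_betw_imageI)
        show "inj_on (g L) {1..n}"
        proof
          fix i j assume ij: "i \<in> {1..n}" "j \<in> {1..n}" "g L i = g L j"
          then have "L ! (i - 1) = L ! (j - 1)" unfolding g_def by simp
          then have "i - 1 = j - 1" using nth_eq_iff_index_eq[OF dL] ij len by auto
          then show "i = j" using ij by auto
        qed
        have "g L ` {1..n} = (\<lambda>k. L ! k) ` {..<n}"
        proof (rule set_eqI, rule iffI)
          fix y assume "y \<in> g L ` {1..n}"
          then obtain i where "i \<in> {1..n}" "y = L ! (i - 1)" unfolding g_def by auto
          then show "y \<in> (\<lambda>k. L ! k) ` {..<n}" by (intro image_eqI[of _ _ "i - 1"]) auto
        next
          fix y assume "y \<in> (\<lambda>k. L ! k) ` {..<n}"
          then obtain k where "k < n" "y = L ! k" by auto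
          then show "y \<in> g L ` {1..n}" unfolding g_def by (intro image_eqI[of _ _ "Suc k"]) auto
        qed
        also have "\<dots> = set L" using len by (auto simp: set_conv_nth)
        finally show "g L ` {1..n} = {1..n}" using sL by simp
      qed
      have "g L permutes {1..n}" by (rule bij_imp_permutes[OF bij]) (auto simp: g_def)
      moreover have "map (g L) [1..<Suc n] = L"
        by (rule nth_equalityI) (auto simp: len g_def nth_map_upt)
      then have "descents (g L) n \<subseteq> S" using aL descents_asc by metis
      ultimately show "t0 \<in> {t. t permutes {1..n} \<and> descents t n \<subseteq> S}" using t0 by simp
    qed
  qed
qed

fun seg :: "nat list \<Rightarrow> 'a list \<Rightarrow> 'a list list" where
  "seg [] L = []"
| "seg (a # x) L = take a L # seg x (drop a L)"

lemma concat_seg: "sum_list x = length L \<Longrightarrow> concat (seg x L) = L"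
  by (induction x arbitrary: L) auto

lemma length_seg: "sum_list x = length L \<Longrightarrow> map length (seg x L) = x"
  by (induction x arbitrary: L) auto

lemma seg_concat: "seg (map length ls) (concat ls) = ls"
  by (induction ls) auto

lemma asc_empty: "asc {} L \<longleftrightarrow> sorted L"
  unfolding asc_def sorted_iff_nth_Suc by simp

lemma asc_split:
  assumes "0 < a" "a \<le> length L"
  shows "asc (insert a ((+) a ` S)) L \<longleftrightarrow> asc {} (take a L) \<and> asc S (drop a L)"
proof
  assume A: "asc (insert a ((+) a ` S)) L"
  show "asc {} (take a L) \<and> asc S (drop a L)"
  proof
    show "asc {} (take a L)" unfolding asc_def
    proof (intro allI impI)
      fix i assume i: "Suc i < length (take a L)"
      then have "Suc i \<notin> insert a ((+) a ` S)" "Suc i < length L" using assms by auto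
      then show "take a L ! i \<le> take a L ! Suc i" using A i unfolding asc_def by auto
    qed
    show "asc S (drop a L)" unfolding asc_def
    proof (intro allI impI)
      fix i assume i: "Suc i < length (drop a L)" "Suc i \<notin> S"
      then have "Suc (a + i) \<notin> insert a ((+) a ` S)" "Suc (a + i) < length L" using assms by auto
      then have "L ! (a + i) \<le> L ! Suc (a + i)" using A unfolding asc_def by auto
      then show "drop a L ! i \<le> drop a L ! Suc i" using assms by simp
    qed
  qed
next
  assume B: "asc {} (take a L) \<and> asc S (drop a L)"
  show "asc (insert a ((+) a ` S)) L" unfolding asc_def
  proof (intro allI impI)
    fix i assume i: "Suc i < length L" "Suc i \<notin> insert a ((+) a ` S)"
    show "L ! i \<le> L ! Suc i"
    proof (cases "Suc i < a")
      case True
      then have "take a L ! i \<le> take a L ! Suc i" using B i unfolding asc_def by auto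
      then show ?thesis using True by simp
    next
      case False
      then have "Suc i > a" using i by auto
      then obtain j where j: "i = a + j" by (metis less_Suc_eq_le le_add_diff_inverse)
      have "Suc j \<notin> S" using i(2) j by auto
      moreover have "Suc j < length (drop a L)" using i j by auto
      ultimately have "drop a L ! j \<le> drop a L ! Suc j" using B unfolding asc_def by auto
      then show ?thesis using j assms by simp
    qed
  qed
qed

lemma asc_seg:
  assumes "pos_bl x" "x \<noteq> []" "sum_list x = length L"
  shows "asc (cds x) L \<longleftrightarrow> (\<forall>l\<in>set (seg x L). sorted l)"
  using assms
proof (induction x arbitrary: L)
  case Nil then show ?case by simp
next
  case (Cons a x)
  show ?case
  proof (cases "x = []")
    case True
    then show ?thesis using Cons.prems by (simp add: cds_cons asc_empty)
  next
    case False
    have a: "0 < a" "pos_bl x" using Cons.prems(1) pos_bl_cons[OF False] by auto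
    have al: "a \<le> length L" using Cons.prems(3) by simp
    have "asc (cds (a # x)) L \<longleftrightarrow> asc {} (take a L) \<and> asc (cds x) (drop a L)"
      using False asc_split[OF a(1) al] by (simp add: cds_cons)
    also have "\<dots> \<longleftrightarrow> sorted (take a L) \<and> (\<forall>l\<in>set (seg x (drop a L)). sorted l)"
      using Cons.IH[OF a(2) False] Cons.prems(3) by (simp add: asc_empty)
    finally show ?thesis by simp
  qed
qed


definition sz :: "nat \<Rightarrow> nat set list \<Rightarrow> nat list" where
  "sz n bs = map card bs @ [n - sum_list (map card bs)]"

fun dl :: "nat set list \<Rightarrow> bool" where
  "dl [] = True"
| "dl (B # bs) = (B \<inter> \<Union>(set bs) = {} \<and> dl bs)"

lemma dl_append: "dl (xs @ ys) \<longleftrightarrow> dl xs \<and> dl ys \<and> \<Union>(set xs) \<inter> \<Union>(set ys) = {}"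
  by (induction xs) auto

lemma okl_dl: "okl bs \<Longrightarrow> dl bs"
  by (induction bs) auto

lemma distinct_concat_sorted:
  "dl bs \<Longrightarrow> (\<forall>B\<in>set bs. finite B) \<Longrightarrow> distinct (concat (map sorted_list_of_set bs))"
  by (induction bs) auto

lemma set_concat_sorted:
  "(\<forall>B\<in>set bs. finite B) \<Longrightarrow> set (concat (map sorted_list_of_set bs)) = \<Union>(set bs)"
  by (induction bs) auto

lemma okl_of_distinct: "distinct (concat ls) \<Longrightarrow> (\<forall>l\<in>set ls. l \<noteq> []) \<Longrightarrow> okl (map set ls)"
  by (induction ls) auto

lemma card_okl: "okl bs \<Longrightarrow> (\<forall>B\<in>set bs. finite B) \<Longrightarrow> card (\<Union>(set bs)) = sum_list (map card bs)"
  by (induction bs) (auto simp: card_Un_disjoint)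

lemma OL_finite_blocks: "bs \<in> OL n \<Longrightarrow> \<forall>B\<in>set bs. finite B"
proof
  fix B assume "bs \<in> OL n" "B \<in> set bs"
  then have "B \<subseteq> {1..n}" unfolding OL_def by auto
  then show "finite B" by (rule finite_subset) simp
qed

lemma card_OL_sz:
  assumes x: "x \<in> CP n"
  shows "card {bs\<in>OL n. sz n bs = x} = card {L. distinct L \<and> set L = {1..n} \<and> asc (cds x) L}"
proof (rule sym, rule bij_betw_same_card)
  have xne: "x \<noteq> []" and sx: "sum_list x = n" and px: "pos_bl x" using x unfolding CP_iff by auto
  define Phi where "Phi L = map set (butlast (seg x L))" for L :: "nat list"
  define Psi where "Psi bs = concat (map sorted_list_of_set (bs @ [{1..n} - \<Union>(set bs)]))" for bs
  let ?A = "{L. distinct L \<and> set L = {1..n} \<and> asc (cds x) L}"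
  let ?B = "{bs\<in>OL n. sz n bs = x}"
  have LA: "Psi (Phi L) = L \<and> Phi L \<in> ?B" if L: "L \<in> ?A" for L
  proof -
    have dL: "distinct L" and sL: "set L = {1..n}" and aL: "asc (cds x) L" using L by auto
    have len: "length L = n" using distinct_card[OF dL] sL by simp
    define ls where "ls = seg x L"
    have cls: "concat ls = L" unfolding ls_def using concat_seg[of x L] sx len by simp
    have mls: "map length ls = x" unfolding ls_def using length_seg[of x L] sx len by simp
    have lsne: "ls \<noteq> []" using mls xne by auto
    have srt: "\<forall>l\<in>set ls. sorted l" using asc_seg[OF px xne, of L] aL sx len unfolding ls_def by simp
    have dst: "\<forall>l\<in>set ls. distinct l" using dL cls distinct_concat_iff by blast
    have lsd: "ls = butlast ls @ [last ls]" using lsne by simp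
    have d2: "distinct (concat (butlast ls) @ last ls)" using dL cls lsd by (metis concat_append concat.simps append_Nil2)
    then have d3: "distinct (concat (butlast ls))" "set (concat (butlast ls)) \<inter> set (last ls) = {}" by auto
    have sL2: "set L = set (concat (butlast ls)) \<union> set (last ls)" using cls lsd by (metis set_append concat_append concat.simps append_Nil2)
    have mbl: "map length (butlast ls) = butlast x" using mls by (metis map_butlast)
    have ne: "\<forall>l\<in>set (butlast ls). l \<noteq> []"
    proof
      fix l assume "l \<in> set (butlast ls)"
      then have "length l \<in> set (butlast x)" using mbl by (metis image_eqI set_map)
      then show "l \<noteq> []" using px unfolding pos_bl_def by auto
    qed
    have okl: "okl (Phi L)" unfolding Phi_def ls_def[symmetric] using okl_of_distinct[OF d3(1) ne] by simp
    have U: "\<Union>(set (Phi L)) = set (concat (butlast ls))" unfolding Phi_def ls_def[symmetric] by auto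
    have Usub: "\<Union>(set (Phi L)) \<subseteq> {1..n}" using U sL2 sL by auto
    have cards: "map card (Phi L) = butlast x"
    proof -
      have "map card (Phi L) = map length (butlast ls)" unfolding Phi_def ls_def[symmetric]
        using dst by (auto intro!: map_cong distinct_card dest: in_set_butlastD)
      then show ?thesis using mbl by simp
    qed
    have "n - sum_list (butlast x) = last x" using sum_butlast_last[OF xne] sx by simp
    then have "sz n (Phi L) = x"
      unfolding sz_def cards using xne by simp
    then have inB: "Phi L \<in> ?B" using okl Usub unfolding OL_def by simp
    have Z: "{1..n} - \<Union>(set (Phi L)) = set (last ls)" using U sL2 sL d3(2) by auto
    have "Psi (Phi L) = concat (map sorted_list_of_set (map set (butlast ls) @ [set (last ls)]))"
      unfolding Psi_def Z unfolding Phi_def ls_def by simp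
    also have "\<dots> = concat (map (sorted_list_of_set \<circ> set) ls)" using lsd by (metis map_append map_map list.map(1) list.map(2))
    also have "\<dots> = concat ls"
      using srt dst by (auto intro!: arg_cong[where f = concat] map_idI sorted_list_of_set.idem_if_sorted_distinct)
    finally show ?thesis using cls inB by simp
  qed
  have BB: "Phi (Psi bs) = bs \<and> Psi bs \<in> ?A" if bs: "bs \<in> ?B" for bs
  proof -
    have o: "okl bs" and u: "\<Union>(set bs) \<subseteq> {1..n}" and szx: "sz n bs = x" using bs unfolding OL_def by auto
    have fin: "\<forall>B\<in>set bs. finite B" using OL_finite_blocks bs by auto
    define Z where "Z = {1..n} - \<Union>(set bs)"
    define ls where "ls = map sorted_list_of_set (bs @ [Z])"
    have finZ: "\<forall>B\<in>set (bs @ [Z]). finite B" using fin unfolding Z_def by auto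
    have cZ: "card Z = n - sum_list (map card bs)"
      unfolding Z_def using card_okl[OF o fin] u by (simp add: card_Diff_subset finite_Union fin)
    have mls: "map length ls = x"
      unfolding ls_def using finZ szx cZ unfolding sz_def by (auto intro!: map_cong)
    have Psi_eq: "Psi bs = concat ls" unfolding Psi_def ls_def Z_def by simp
    have dlz: "dl (bs @ [Z])" using okl_dl[OF o] unfolding dl_append Z_def by auto
    have dP: "distinct (Psi bs)" unfolding Psi_eq ls_def using distinct_concat_sorted[OF dlz finZ] .
    have sP: "set (Psi bs) = {1..n}" unfolding Psi_eq ls_def using set_concat_sorted[OF finZ] u unfolding Z_def by auto
    have seg: "seg x (Psi bs) = ls" unfolding Psi_eq mls[symmetric] by (rule seg_concat)
    have lenP: "sum_list x = length (Psi bs)" unfolding Psi_eq mls[symmetric] by (simp add: length_concat)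
    have "\<forall>l\<in>set ls. sorted l" unfolding ls_def by auto
    then have aP: "asc (cds x) (Psi bs)" using asc_seg[OF px xne lenP] seg by simp
    have "Phi (Psi bs) = map set (map sorted_list_of_set bs)"
      unfolding Phi_def seg ls_def by (simp add: butlast_append)
    also have "\<dots> = bs" using fin by (induction bs) auto
    finally show ?thesis using dP sP aP by simp
  qed
  show "bij_betw Phi ?A ?B"
    by (rule bij_betw_byWitness[where f' = Psi]) (use LA BB in auto)
qed


lemma bool_sum:
  assumes fin: "finite B" and AB: "A \<subseteq> B"
  shows "(\<Sum>S\<in>{S. S \<subseteq> B \<and> A \<subseteq> S}. (-1::int) ^ card S) = (if A = B then (-1) ^ card B else 0)"
proof (cases "A = B")
  case True
  then have "{S. S \<subseteq> B \<and> A \<subseteq> S} = {B}" by auto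
  then show ?thesis using True by simp
next
  case False
  then obtain c where c: "c \<in> B" "c \<notin> A" using AB by auto
  define h where "h S = (if c \<in> S then S - {c} else insert c S)" for S
  have "(\<Sum>S\<in>{S. S \<subseteq> B \<and> A \<subseteq> S}. (-1::int) ^ card S) = 0"
  proof (rule sum_involution_eq_0[where h = h])
    fix S assume S: "S \<in> {S. S \<subseteq> B \<and> A \<subseteq> S}"
    then have fS: "finite S" using fin finite_subset by auto
    show "h S \<in> {S. S \<subseteq> B \<and> A \<subseteq> S}" using S c unfolding h_def by auto
    show "h (h S) = S" unfolding h_def by auto
    show "h S \<noteq> S" unfolding h_def by auto
    show "(-1::int) ^ card (h S) + (-1) ^ card S = 0"
    proof (cases "c \<in> S")
      case True
      have "card S = Suc (card (S - {c}))" using fS True by (metis card_Suc_Diff1)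
      then obtain k where "card S = Suc k" "card (S - {c}) = k" by blast
      then show ?thesis using True unfolding h_def by simp
    next
      case False
      then show ?thesis using fS unfolding h_def by simp
    qed
  qed
  then show ?thesis using False by simp
qed

definition NN :: "nat \<Rightarrow> nat list \<Rightarrow> nat" where
  "NN n c = card {bs\<in>OL n. sz n bs = c}"

lemma NN_perm: "c \<in> CP n \<Longrightarrow> NN n c = card {t. t permutes {1..n} \<and> descents t n \<subseteq> cds c}"
  unfolding NN_def by (simp only: card_OL_sz perm_list_card)

lemma card_sum_mult: "finite T \<Longrightarrow> c * int (card {t\<in>T. P t}) = (\<Sum>t\<in>T. if P t then c else (0::int))"
  by (simp add: sum.inter_filter[symmetric])

lemma C3:
  assumes z: "z \<in> CP n"
  shows "(-1) ^ (length z - 1) * beta z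
     = (\<Sum>x\<in>{x\<in>CP n. comp_le z x}. (-1) ^ (length x - 1) * int (NN n x))"
proof -
  have zne: "z \<noteq> []" and pz: "pos_bl z" using z unfolding CP_iff by auto
  define T where "T = {t. t permutes {1..n::nat}}"
  have finT: "finite T" unfolding T_def by (simp add: finite_permutations)
  define X where "X = {x\<in>CP n. comp_le z x}"
  have bij: "bij_betw cds X (Pow (cds z))"
  proof (rule bij_betw_imageI)
    show "inj_on cds X"
    proof
      fix x y assume "x \<in> X" "y \<in> X" "cds x = cds y"
      then show "x = y" unfolding X_def CP_iff using cds_inj by auto
    qed
    show "cds ` X = Pow (cds z)"
    proof
      show "cds ` X \<subseteq> Pow (cds z)" unfolding X_def using comp_le_props[OF _ pz zne] by auto
      show "Pow (cds z) \<subseteq> cds ` X"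
      proof
        fix S assume "S \<in> Pow (cds z)"
        then obtain x where x: "comp_le z x" "cds x = S" using cds_surj[OF pz zne] by blast
        then have "x \<in> CP n" using comp_le_props[OF x(1) pz zne] z unfolding CP_iff by simp
        then show "S \<in> cds ` X" using x unfolding X_def by blast
      qed
    qed
  qed
  have "(\<Sum>x\<in>X. (-1) ^ (length x - 1) * int (NN n x))
      = (\<Sum>x\<in>X. (\<lambda>S. (-1) ^ card S * int (card {t\<in>T. descents t n \<subseteq> S})) (cds x))"
  proof (rule sum.cong, simp)
    fix x assume "x \<in> X"
    then have xc: "x \<in> CP n" unfolding X_def by simp
    then have "length x - 1 = card (cds x)" using card_cds unfolding CP_iff by simp
    then show "(-1) ^ (length x - 1) * int (NN n x) = (\<lambda>S. (-1) ^ card S * int (card {t\<in>T. descents t n \<subseteq> S})) (cds x)"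
      using NN_perm[OF xc] unfolding T_def by simp
  qed
  also have "\<dots> = (\<Sum>S\<in>Pow (cds z). (-1) ^ card S * int (card {t\<in>T. descents t n \<subseteq> S}))"
    by (rule sum.reindex_bij_betw[OF bij])
  also have "\<dots> = (\<Sum>S\<in>Pow (cds z). \<Sum>t\<in>T. if descents t n \<subseteq> S then (-1) ^ card S else 0)"
    by (rule sum.cong, simp) (rule card_sum_mult[OF finT])
  also have "\<dots> = (\<Sum>t\<in>T. \<Sum>S\<in>Pow (cds z). if descents t n \<subseteq> S then (-1) ^ card S else 0)"
    by (rule sum.swap)
  also have "\<dots> = (\<Sum>t\<in>T. if descents t n = cds z then (-1) ^ card (cds z) else 0)"
  proof (rule sum.cong, simp)
    fix t assume "t \<in> T"
    have "(\<Sum>S\<in>Pow (cds z). if descents t n \<subseteq> S then (-1::int) ^ card S else 0)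
        = (\<Sum>S\<in>{S. S \<subseteq> cds z \<and> descents t n \<subseteq> S}. (-1) ^ card S)"
      by (simp add: sum.inter_filter[symmetric] finite_cds)
    also have "\<dots> = (if descents t n = cds z then (-1) ^ card (cds z) else 0)"
    proof (cases "descents t n \<subseteq> cds z")
      case True then show ?thesis using bool_sum[OF finite_cds True] by simp
    next
      case False
      then have e: "{S. S \<subseteq> cds z \<and> descents t n \<subseteq> S} = {}" by blast
      have "descents t n \<noteq> cds z" using False by blast
      then show ?thesis unfolding e sum.empty by simp
    qed
    finally show "(\<Sum>S\<in>Pow (cds z). if descents t n \<subseteq> S then (-1::int) ^ card S else 0)
        = (if descents t n = cds z then (-1) ^ card (cds z) else 0)" .
  qed
  also have "\<dots> = (-1) ^ card (cds z) * int (card {t\<in>T. descents t n = cds z})"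
    by (rule card_sum_mult[OF finT, symmetric])
  also have "\<dots> = (-1) ^ (length z - 1) * beta z"
    by (simp only: beta_eq[OF z] card_cds[OF pz] T_def mem_Collect_eq)
  finally show ?thesis unfolding X_def by (rule sym)
qed


lemma PiP_top_in: "PiP_top n \<in> PiP n"
  unfolding PiP_top_def PiP_def by (simp add: partition_on_empty)

lemma psp_type_top: "psp_type (PiP_top n) = ({#}, n)"
  unfolding psp_type_def PiP_top_def by simp

lemma sz_props:
  assumes bs: "bs \<in> OL n"
  shows "sz n bs \<in> CP n" "psp_type (psi n bs) = comp_type (sz n bs)" "length (sz n bs) - 1 = length bs"
proof -
  have o: "okl bs" and u: "\<Union>(set bs) \<subseteq> {1..n}" using bs unfolding OL_def by auto
  have fin: "\<forall>B\<in>set bs. finite B" using OL_finite_blocks[OF bs] .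
  have cU: "card (\<Union>(set bs)) = sum_list (map card bs)" using card_okl[OF o fin] .
  have le: "sum_list (map card bs) \<le> n" using cU card_mono[OF _ u] by simp
  have pos: "\<forall>x\<in>set (map card bs). 0 < x" using okl_nonempty[OF o] fin by (auto simp: card_gt_0_iff)
  show "sz n bs \<in> CP n" unfolding CP_def sz_def using le pos by (simp add: butlast_append)
  have "image_mset card (mset_set (set bs)) = mset (map card bs)"
    using okl_distinct[OF o] by (simp add: mset_set_set)
  moreover have "card ({1..n} - \<Union>(set bs)) = n - sum_list (map card bs)"
    using u cU by (simp add: card_Diff_subset finite_Union fin)
  ultimately show "psp_type (psi n bs) = comp_type (sz n bs)"
    unfolding psp_type_def psi_def comp_type_def sz_def by (simp add: butlast_append)
  show "length (sz n bs) - 1 = length bs" unfolding sz_def by simp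
qed

theorem theorem3p1:
  fixes n :: nat and F :: "pip set"
  assumes "is_filter_IP n F" and "F \<noteq> {}"
  shows "mobius (with_bot {p \<in> PiP n. psp_type p \<in> F}) (lift_bot psp_le) None (Some (PiP_top n))
       = (\<Sum>c\<in>{c \<in> CP n. comp_type c \<in> F}.
            (-1) ^ (length c - 1)
            * mobius (with_bot {c \<in> CP n. comp_type c \<in> F}) (lift_bot comp_le) None (Some c)
            * beta c)"
proof -
  have FI: "F \<subseteq> IP n" and up: "\<And>x y. x \<in> F \<Longrightarrow> y \<in> IP n \<Longrightarrow> ip_le x y \<Longrightarrow> y \<in> F"
    using assms(1) unfolding is_filter_IP_def by auto
  define PF where "PF = {p \<in> PiP n. psp_type p \<in> F}"
  define CF where "CF = {c \<in> CP n. comp_type c \<in> F}"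
  define gP where "gP z = mobius (with_bot PF) (lift_bot psp_le) None (Some z)" for z
  define gC where "gC c = mobius (with_bot CF) (lift_bot comp_le) None (Some c)" for c
  define top where "top = PiP_top n"
  have PFsub: "PF \<subseteq> PiP n" and CFsub: "CF \<subseteq> CP n" unfolding PF_def CF_def by auto
  have top_in: "top \<in> PF"
  proof -
    obtain f where f: "f \<in> F" using assms(2) by auto
    obtain l m where lm: "f = (l, m)" by (cases f)
    have "sum_mset l + m = n" using FI f lm unfolding IP_def by auto
    moreover have "ip_le ({#} + l, m) ({#}, sum_mset l + m)" by (rule ip_le_point_all)
    ultimately have "ip_le f ({#}, n)" using lm by simp
    moreover have "({#}, n) \<in> IP n" unfolding IP_def by simp
    ultimately have "({#}, n) \<in> F" using up f by blast
    then show ?thesis unfolding PF_def top_def using PiP_top_in psp_type_top by simp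
  qed
  have upP: "y \<in> PF" if "x \<in> PF" "y \<in> PiP n" "psp_le x y" for x y
  proof -
    obtain s Z where x: "x = (s, Z)" by (cases x)
    obtain s' Z' where y: "y = (s', Z')" by (cases y)
    have "ip_le (psp_type x) (psp_type y)" using psp_type_mono that PFsub x y by auto
    moreover have "psp_type y \<in> IP n" using psp_type_IP that(2) y by simp
    moreover have "psp_type x \<in> F" using that(1) unfolding PF_def by simp
    ultimately have "psp_type y \<in> F" using up by blast
    then show ?thesis using that(2) unfolding PF_def by simp
  qed
  have upC: "y \<in> CF" if "x \<in> CF" "y \<in> CP n" "comp_le x y" for x y
  proof -
    have "ip_le (comp_type x) (comp_type y)" using comp_type_mono that(3) .
    moreover have "comp_type y \<in> IP n" using comp_type_IP that(2) .
    moreover have "comp_type x \<in> F" using that(1) unfolding CF_def by simp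
    ultimately have "comp_type y \<in> F" using up by blast
    then show ?thesis using that(2) unfolding CF_def by simp
  qed
  have "(\<Sum>z\<in>PF. gP z * (if z = top then 1 else 0)) = - (\<Sum>x\<in>PF. uP n x)"
    unfolding gP_def
  proof (rule weighted_sum[OF finite_PiP PFsub porder_on_subset[OF porder_PiP PFsub]])
    show "\<And>x y. x \<in> PF \<Longrightarrow> y \<in> PiP n \<Longrightarrow> psp_le x y \<Longrightarrow> y \<in> PF" by (rule upP)
    fix z assume "z \<in> PF"
    then show "(if z = top then 1 else 0) = (\<Sum>x\<in>{x\<in>PiP n. psp_le z x}. uP n x)"
      using sum_uP_above[of z n] PFsub unfolding top_def by auto
  qed
  moreover have "(\<Sum>z\<in>PF. gP z * (if z = top then 1 else 0)) = gP top"
  proof -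
    have "(\<Sum>z\<in>PF. gP z * (if z = top then 1 else 0)) = (\<Sum>z\<in>PF. if z = top then gP z else 0)"
      by (rule sum.cong) auto
    also have "\<dots> = gP top" using top_in finite_subset[OF PFsub finite_PiP] by (simp add: sum.delta')
    finally show ?thesis .
  qed
  moreover have "(\<Sum>x\<in>PF. uP n x) = (\<Sum>c\<in>CF. (-1) ^ (length c - 1) * int (NN n c))"
  proof -
    have "(\<Sum>x\<in>PF. uP n x) = (\<Sum>bs\<in>{bs\<in>OL n. psi n bs \<in> PF}. (-1) ^ length bs)"
      by (rule sum_uP_group[OF PFsub])
    also have "{bs\<in>OL n. psi n bs \<in> PF} = {bs\<in>OL n. comp_type (sz n bs) \<in> F}"
      unfolding PF_def using psi_PiP sz_props(2) by auto
    also have "(\<Sum>bs\<in>{bs\<in>OL n. comp_type (sz n bs) \<in> F}. (-1::int) ^ length bs)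
        = (\<Sum>c\<in>CF. \<Sum>bs\<in>{bs\<in>{bs\<in>OL n. comp_type (sz n bs) \<in> F}. sz n bs = c}. (-1) ^ length bs)"
      by (rule sum.group[symmetric])
        (use finite_subset[OF CFsub finite_CP] in \<open>auto simp: finite_OL CF_def sz_props(1)\<close>)
    also have "\<dots> = (\<Sum>c\<in>CF. (-1) ^ (length c - 1) * int (NN n c))"
    proof (rule sum.cong, simp)
      fix c assume c: "c \<in> CF"
      have "{bs\<in>{bs\<in>OL n. comp_type (sz n bs) \<in> F}. sz n bs = c} = {bs\<in>OL n. sz n bs = c}"
        using c unfolding CF_def by auto
      moreover have "(\<Sum>bs\<in>{bs\<in>OL n. sz n bs = c}. (-1::int) ^ length bs)
          = (\<Sum>bs\<in>{bs\<in>OL n. sz n bs = c}. (-1) ^ (length c - 1))"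
        by (rule sum.cong) (auto simp: sz_props(3)[symmetric])
      ultimately show "(\<Sum>bs\<in>{bs\<in>{bs\<in>OL n. comp_type (sz n bs) \<in> F}. sz n bs = c}. (-1) ^ length bs)
          = (-1) ^ (length c - 1) * int (NN n c)"
        unfolding NN_def by (simp add: mult.commute)
    qed
    finally show ?thesis .
  qed
  ultimately have LHS: "gP top = - (\<Sum>c\<in>CF. (-1) ^ (length c - 1) * int (NN n c))" by simp
  have RHS: "(\<Sum>c\<in>CF. gC c * ((-1) ^ (length c - 1) * beta c))
      = - (\<Sum>c\<in>CF. (-1) ^ (length c - 1) * int (NN n c))"
    unfolding gC_def
  proof (rule weighted_sum[OF finite_CP CFsub porder_on_subset[OF porder_CP CFsub]])
    show "\<And>x y. x \<in> CF \<Longrightarrow> y \<in> CP n \<Longrightarrow> comp_le x y \<Longrightarrow> y \<in> CF" by (rule upC)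
    fix z assume "z \<in> CF"
    then show "(-1) ^ (length z - 1) * beta z = (\<Sum>x\<in>{x\<in>CP n. comp_le z x}. (-1) ^ (length x - 1) * int (NN n x))"
      using C3[of z n] CFsub by auto
  qed
  have "(\<Sum>c\<in>CF. (-1) ^ (length c - 1) * gC c * beta c) = (\<Sum>c\<in>CF. gC c * ((-1) ^ (length c - 1) * beta c))"
    by (rule sum.cong) (simp_all add: ac_simps)
  then show ?thesis using LHS RHS unfolding gP_def gC_def top_def PF_def CF_def by simp
qed


end
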